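(* Let $\mu$ be a finite Borel measure on $\Sigma$ and $\nu=\mu\circ\Pi^{-1}$. (i) Suppose $\mathcal{D}$ is two-dimensional. Then for every $x=\Pi(\omega)\in\Lambda$ with $\lim_{n\to\infty}R_n(\omega)/n=0$, \[\liminf_{r\to0}\frac{\log\nu(B(x,r))}{\log r}\ \ge\ \liminf_{n\to\infty}\frac{\log\mu(B_n(\omega))}{\log\prod_{\nu=1}^n b_{i_\nu}}.\] (ii) For every $x=\Pi(\omega)\in\Lambda$, \[\liminf_{r\to0}\frac{\log\nu(B(x,r))}{\log r}\ \le\ \liminf_{n\to\infty}\frac{\log\mu(B_n(\omega))}{\log\prod_{\nu=1}^n b_{i_\nu}}.\]
   Context: Standing setting (Lalley–Gatzouras system). Let $p\ge 1$ and $m_1,\dots,m_p\ge1$ be integers and $\mathcal{D}=\{(i,j):1\le i\le p,\ 1\le j\le m_i\}$. For $(i,j)\in\mathcal{D}$ let $S_{ij}(x)=\begin{pmatrix}a_{ij}&0\\0&b_i\end{pmatrix}x+\begin{pmatrix}c_{ij}\\ d_i\end{pmatrix}$ on $[0,1]^2$, where $0<a_{ij}\le b_i<1$, $0\le d_1\le\dots\le d_p<1$, $d_{i+1}-d_i\ge b_i$, $b_p+d_p\le 1$, and for each $i$: $0\le c_{i1}\le\dots\le c_{im_i}<1$, $c_{i(j+1)}-c_{ij}\ge a_{ij}$, $a_{im_i}+c_{im_i}\le1$. Let $\Sigma=\mathcal{D}^{\mathbb{N}}$, write $\omega=((i_\nu,j_\nu))_{\nu\ge1}$, $\Pi(\omega)=\lim_n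 S_{\omega_1}\circ\cdots\circ S_{\omega_n}([0,1]^2)$, $\Lambda=\Pi(\Sigma)$. Let $a_{\min}=\min_{(i,j)}a_{ij}$. Define $L_n(\omega)=\min\{l\ge1:\prod_{\nu=1}^l a_{i_\nu j_\nu}\le\prod_{\nu=1}^n b_{i_\nu}\}$ and the approximate symbolic square $B_n(\omega)=\{\omega'\in\Sigma:\omega'_\nu=\omega_\nu\ (1\le\nu\le L_n(\omega)),\ i'_\nu=i_\nu\ (L_n(\omega)<\nu\le n)\}$. $\mathcal{D}$ is called two-dimensional if there exist $(i_1,j_1),(i_2,j_2)\in\mathcal{D}$ with $i_1=i_2$, $j_1\ne j_2$, and there exist $(i_3,j_3),(i_4,j_4)\in\mathcal{D}$ with $i_3\ne i_4$. For $d\in\mathcal{D}$ let $R^d_n(\omega)=\min\{l>n:\omega_l=d\}-n$ and $R_n(\omega)=\max_{d\in\mathcal{D}}R^d_n(\omega)$. $B(x,r)$ is the closed (or open) ball in $\mathbb{R}^2$. *)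

theory Defs
  imports "HOL-Analysis.Analysis"
begin

text \<open>Sequences omega = (omega_1, omega_2, ...) are represented 0-based: w k = omega_(k+1).\<close>

definition digits :: "nat \<Rightarrow> (nat \<Rightarrow> nat) \<Rightarrow> (nat \<times> nat) set" where
  "digits p m = {(i, j). 1 \<le> i \<and> i \<le> p \<and> 1 \<le> j \<and> j \<le> m i}"

definition LG_system ::
  "nat \<Rightarrow> (nat \<Rightarrow> nat) \<Rightarrow> (nat \<Rightarrow> nat \<Rightarrow> real) \<Rightarrow> (nat \<Rightarrow> real) \<Rightarrow>
   (nat \<Rightarrow> nat \<Rightarrow> real) \<Rightarrow> (nat \<Rightarrow> real) \<Rightarrow> bool" where
  "LG_system p m a b c d \<longleftrightarrow>
     p \<ge> 1 \<and> (\<forall>i\<in>{1..p}. m i \<ge> 1) \<and>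
     (\<forall>(i, j)\<in>digits p m. 0 < a i j \<and> a i j \<le> b i \<and> b i < 1) \<and>
     0 \<le> d 1 \<and> (\<forall>i\<in>{1..<p}. d i \<le> d (i + 1)) \<and> d p < 1 \<and>
     (\<forall>i\<in>{1..<p}. d (i + 1) - d i \<ge> b i) \<and> b p + d p \<le> 1 \<and>
     (\<forall>i\<in>{1..p}.
        0 \<le> c i 1 \<and> (\<forall>j\<in>{1..<m i}. c i j \<le> c i (j + 1)) \<and> c i (m i) < 1 \<and>
        (\<forall>j\<in>{1..<m i}. c i (j + 1) - c i j \<ge> a i j) \<and> a i (m i) + c i (m i) \<le> 1)"

definition Smap :: "(nat \<Rightarrow> nat \<Rightarrow> real) \<Rightarrow> (nat \<Rightarrow> real) \<Rightarrow> (nat \<Rightarrow> nat \<Rightarrow> real) \<Rightarrow>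
    (nat \<Rightarrow> real) \<Rightarrow> nat \<times> nat \<Rightarrow> real \<times> real \<Rightarrow> real \<times> real" where
  "Smap a b c d ij z = (a (fst ij) (snd ij) * fst z + c (fst ij) (snd ij), b (fst ij) * snd z + d (fst ij))"

primrec Scomp :: "(nat \<Rightarrow> nat \<Rightarrow> real) \<Rightarrow> (nat \<Rightarrow> real) \<Rightarrow> (nat \<Rightarrow> nat \<Rightarrow> real) \<Rightarrow>
    (nat \<Rightarrow> real) \<Rightarrow> (nat \<Rightarrow> nat \<times> nat) \<Rightarrow> nat \<Rightarrow> real \<times> real \<Rightarrow> real \<times> real" where
  "Scomp a b c d w 0 = id"
| "Scomp a b c d w (Suc n) = Scomp a b c d w n \<circ> Smap a b c d (w n)"

definition unit_square :: "(real \<times> real) set" where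
  "unit_square = {0..1} \<times> {0..1}"

definition SigmaD :: "nat \<Rightarrow> (nat \<Rightarrow> nat) \<Rightarrow> (nat \<Rightarrow> nat \<times> nat) set" where
  "SigmaD p m = {w. \<forall>k. w k \<in> digits p m}"

text \<open>Coding map: Pi(omega) is the limit (= the unique point of the intersection) of the
  nested sets S_(omega_1) o ... o S_(omega_n)([0,1]^2).\<close>
definition coding :: "(nat \<Rightarrow> nat \<Rightarrow> real) \<Rightarrow> (nat \<Rightarrow> real) \<Rightarrow> (nat \<Rightarrow> nat \<Rightarrow> real) \<Rightarrow>
    (nat \<Rightarrow> real) \<Rightarrow> (nat \<Rightarrow> nat \<times> nat) \<Rightarrow> real \<times> real" where
  "coding a b c d w = (THE z. z \<in> (\<Inter>n. Scomp a b c d w n ` unit_square))"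

definition bprod :: "(nat \<Rightarrow> real) \<Rightarrow> (nat \<Rightarrow> nat \<times> nat) \<Rightarrow> nat \<Rightarrow> real" where
  "bprod b w n = (\<Prod>k<n. b (fst (w k)))"

definition aprod :: "(nat \<Rightarrow> nat \<Rightarrow> real) \<Rightarrow> (nat \<Rightarrow> nat \<times> nat) \<Rightarrow> nat \<Rightarrow> real" where
  "aprod a w l = (\<Prod>k<l. a (fst (w k)) (snd (w k)))"

definition Lfun :: "(nat \<Rightarrow> nat \<Rightarrow> real) \<Rightarrow> (nat \<Rightarrow> real) \<Rightarrow> nat \<Rightarrow> (nat \<Rightarrow> nat \<times> nat) \<Rightarrow> nat" where
  "Lfun a b n w = (LEAST l. 1 \<le> l \<and> aprod a w l \<le> bprod b w n)"

definition approx_square :: "nat \<Rightarrow> (nat \<Rightarrow> nat) \<Rightarrow> (nat \<Rightarrow> nat \<Rightarrow> real) \<Rightarrow> (nat \<Rightarrow> real) \<Rightarrow>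
    nat \<Rightarrow> (nat \<Rightarrow> nat \<times> nat) \<Rightarrow> (nat \<Rightarrow> nat \<times> nat) set" where
  "approx_square p m a b n w =
     {w' \<in> SigmaD p m. (\<forall>k < Lfun a b n w. w' k = w k) \<and>
        (\<forall>k. Lfun a b n w \<le> k \<and> k < n \<longrightarrow> fst (w' k) = fst (w k))}"

definition two_dimensional :: "nat \<Rightarrow> (nat \<Rightarrow> nat) \<Rightarrow> bool" where
  "two_dimensional p m \<longleftrightarrow>
     (\<exists>(i1, j1)\<in>digits p m. \<exists>(i2, j2)\<in>digits p m. i1 = i2 \<and> j1 \<noteq> j2) \<and>
     (\<exists>(i3, j3)\<in>digits p m. \<exists>(i4, j4)\<in>digits p m. i3 \<noteq> i4)"

text \<open>R^d_n(omega) = min{l > n : omega_l = d} - n (1-based); infinite if d does not occur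
  after position n. In 0-based form: min{k >= n : w k = d} + 1 - n.\<close>
definition Rd :: "nat \<Rightarrow> (nat \<Rightarrow> nat \<times> nat) \<Rightarrow> nat \<times> nat \<Rightarrow> enat" where
  "Rd n w dd = (if \<exists>k\<ge>n. w k = dd then enat ((LEAST k. n \<le> k \<and> w k = dd) + 1 - n) else \<infinity>)"

definition Rmax :: "nat \<Rightarrow> (nat \<Rightarrow> nat) \<Rightarrow> nat \<Rightarrow> (nat \<Rightarrow> nat \<times> nat) \<Rightarrow> enat" where
  "Rmax p m n w = Max (Rd n w ` digits p m)"

definition elog :: "real \<Rightarrow> ereal" where
  "elog t = (if t > 0 then ereal (ln t) else -\<infinity>)"

end

theory Submission
  imports Defs
begin

definition ser :: "(nat \<Rightarrow> real) \<Rightarrow> (nat \<Rightarrow> real) \<Rightarrow> real" where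
  "ser sc oc = (\<Sum>k. oc k * (\<Prod>j<k. sc j))"

definition good :: "real \<Rightarrow> (nat \<Rightarrow> real) \<Rightarrow> (nat \<Rightarrow> real) \<Rightarrow> bool" where
  "good \<sigma> sc oc \<longleftrightarrow> \<sigma> < 1 \<and> (\<forall>k. 0 < sc k \<and> sc k \<le> \<sigma> \<and> 0 \<le> oc k \<and> oc k + sc k \<le> 1)"

lemma good_Suc: "good \<sigma> sc oc \<Longrightarrow> good \<sigma> (\<lambda>k. sc (Suc k)) (\<lambda>k. oc (Suc k))"
  by (simp add: good_def)

lemma good_sh: "good \<sigma> sc oc \<Longrightarrow> good \<sigma> (\<lambda>k. sc (k + n)) (\<lambda>k. oc (k + n))"
  by (simp add: good_def)

lemma good_facts: assumes "good \<sigma> sc oc"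
  shows "0 < sc k" "0 \<le> sc k" "sc k \<le> \<sigma>" "sc k < 1" "sc k \<le> 1" "0 \<le> oc k" "oc k \<le> 1" "oc k + sc k \<le> 1" "\<sigma> < 1" "0 < \<sigma>"
proof -
  have s: "\<sigma> < 1" and h: "\<And>k. 0 < sc k \<and> sc k \<le> \<sigma> \<and> 0 \<le> oc k \<and> oc k + sc k \<le> 1"
    using assms unfolding good_def by auto
  from h[of k] h[of 0] s show "0 < sc k" "0 \<le> sc k" "sc k \<le> \<sigma>" "sc k < 1" "sc k \<le> 1" "0 \<le> oc k" "oc k \<le> 1" "oc k + sc k \<le> 1" "\<sigma> < 1" "0 < \<sigma>"
    by linarith+
qed

lemma prod_split: "(\<Prod>j<n+(m::nat). f j) = (\<Prod>j<n. f j) * (\<Prod>j<m. f (j+n)::real)"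
  by (induction m) (auto simp: ac_simps)

lemma good_prod_pos: "good \<sigma> sc oc \<Longrightarrow> 0 < (\<Prod>j<n. sc j)"
  by (auto simp: good_def intro!: prod_pos)

lemma good_prod_le: "good \<sigma> sc oc \<Longrightarrow> (\<Prod>j<n. sc j) \<le> \<sigma> ^ n"
proof -
  assume g: "good \<sigma> sc oc"
  have "(\<Prod>j<n. sc j) \<le> (\<Prod>j<n. \<sigma>)"
    using good_facts[OF g] by (intro prod_mono) auto
  then show ?thesis by simp
qed

lemma good_prod_le1: "good \<sigma> sc oc \<Longrightarrow> (\<Prod>j<n. sc j) \<le> 1"
proof -
  assume g: "good \<sigma> sc oc"
  have "(\<Prod>j<n. sc j) \<le> (\<Prod>j<n. 1)"
    using good_facts[OF g] by (intro prod_mono) auto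
  then show ?thesis by simp
qed

lemma good_summable: "good \<sigma> sc oc \<Longrightarrow> summable (\<lambda>k. oc k * (\<Prod>j<k. sc j))"
proof -
  assume g: "good \<sigma> sc oc"
  have s0: "0 \<le> \<sigma>" using g unfolding good_def by (meson less_le_trans less_imp_le)
  have s1: "\<sigma> < 1" using g by (simp add: good_def)
  show ?thesis
  proof (rule summable_comparison_test')
    show "summable (\<lambda>k. \<sigma> ^ k)" using s0 s1 by (simp add: summable_geometric)
    fix k
    have a: "oc k \<le> 1" "0 \<le> oc k" using good_facts[OF g] by auto
    have b: "0 < (\<Prod>j<k. sc j)" "(\<Prod>j<k. sc j) \<le> \<sigma> ^ k"
      using good_prod_pos[OF g] good_prod_le[OF g] by auto
    have "oc k * (\<Prod>j<k. sc j) \<le> 1 * (\<Prod>j<k. sc j)"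
      by (rule mult_right_mono) (use a b in auto)
    then have c: "oc k * (\<Prod>j<k. sc j) \<le> \<sigma> ^ k" using b by linarith
    show "norm (oc k * (\<Prod>j<k. sc j)) \<le> \<sigma> ^ k" using a b c by (simp add: abs_mult)
  qed
qed

lemma good_partial: "good \<sigma> sc oc \<Longrightarrow> (\<Sum>k<n. oc k * (\<Prod>j<k. sc j)) \<le> 1 - (\<Prod>j<n. sc j)"
proof (induction n arbitrary: sc oc)
  case 0 then show ?case by simp
next
  case (Suc n)
  have IH: "(\<Sum>k<n. oc (Suc k) * (\<Prod>j<k. sc (Suc j))) \<le> 1 - (\<Prod>j<n. sc (Suc j))"
    using Suc.IH[OF good_Suc[OF Suc.prems]] .
  have e1: "(\<Sum>k<Suc n. oc k * (\<Prod>j<k. sc j)) = oc 0 + sc 0 * (\<Sum>k<n. oc (Suc k) * (\<Prod>j<k. sc (Suc j)))"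
    by (simp add: sum.lessThan_Suc_shift prod.lessThan_Suc_shift sum_distrib_left ac_simps del: sum.lessThan_Suc prod.lessThan_Suc)
  have e2: "(\<Prod>j<Suc n. sc j) = sc 0 * (\<Prod>j<n. sc (Suc j))"
    by (simp add: prod.lessThan_Suc_shift del: prod.lessThan_Suc)
  have "sc 0 > 0" "oc 0 + sc 0 \<le> 1" using Suc.prems by (auto simp: good_def)
  then have F: "oc 0 + sc 0 * (\<Sum>k<n. oc (Suc k) * (\<Prod>j<k. sc (Suc j))) \<le> 1 - sc 0 * (\<Prod>j<n. sc (Suc j))"
  proof -
    have "sc 0 * (\<Sum>k<n. oc (Suc k) * (\<Prod>j<k. sc (Suc j))) \<le> sc 0 * (1 - (\<Prod>j<n. sc (Suc j)))"
      using IH \<open>sc 0 > 0\<close> by (intro mult_left_mono) auto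
    then have "oc 0 + sc 0 * (\<Sum>k<n. oc (Suc k) * (\<Prod>j<k. sc (Suc j))) \<le> 1 - sc 0 * (\<Prod>j<n. sc (Suc j))"
      using \<open>oc 0 + sc 0 \<le> 1\<close> by (simp add: algebra_simps)
    then show ?thesis by linarith
  qed
  show ?case by (simp only: e1 e2 F)
qed

lemma ser_step: "good \<sigma> sc oc \<Longrightarrow> ser sc oc = oc 0 + sc 0 * ser (\<lambda>k. sc (Suc k)) (\<lambda>k. oc (Suc k))"
proof -
  assume g: "good \<sigma> sc oc"
  have s: "summable (\<lambda>k. oc k * (\<Prod>j<k. sc j))" by (rule good_summable[OF g])
  have s2: "summable (\<lambda>k. oc (Suc k) * (\<Prod>j<k. sc (Suc j)))" by (rule good_summable[OF good_Suc[OF g]])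
  have "(\<Sum>k. oc (Suc k) * (\<Prod>j<Suc k. sc j)) = ser sc oc - oc 0"
    using suminf_split_head[OF s] by (simp add: ser_def)
  moreover have "(\<Sum>k. oc (Suc k) * (\<Prod>j<Suc k. sc j)) = sc 0 * ser (\<lambda>k. sc (Suc k)) (\<lambda>k. oc (Suc k))"
    unfolding ser_def prod.lessThan_Suc_shift using suminf_mult[OF s2, of "sc 0"]
    by (simp add: ac_simps)
  ultimately show ?thesis by simp
qed

lemma ser_split: "good \<sigma> sc oc \<Longrightarrow>
   ser sc oc = (\<Sum>k<n. oc k * (\<Prod>j<k. sc j)) + (\<Prod>j<n. sc j) * ser (\<lambda>k. sc (k + n)) (\<lambda>k. oc (k + n))"
proof (induction n arbitrary: sc oc)
  case 0 then show ?case by simp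
next
  case (Suc n)
  have IH: "ser (\<lambda>k. sc (Suc k)) (\<lambda>k. oc (Suc k)) = (\<Sum>k<n. oc (Suc k) * (\<Prod>j<k. sc (Suc j))) +
     (\<Prod>j<n. sc (Suc j)) * ser (\<lambda>k. sc (Suc (k + n))) (\<lambda>k. oc (Suc (k + n)))"
    using Suc.IH[OF good_Suc[OF Suc.prems]] by simp
  show ?case
    unfolding ser_step[OF Suc.prems] IH
    by (simp add: sum.lessThan_Suc_shift prod.lessThan_Suc_shift sum_distrib_left ring_distribs ac_simps del: sum.lessThan_Suc prod.lessThan_Suc)
qed

lemma ser_nonneg: assumes g: "good \<sigma> sc oc" shows "0 \<le> ser sc oc"
  unfolding ser_def
  by (rule suminf_nonneg[OF good_summable[OF g]]) (use good_facts[OF g] in \<open>auto intro!: mult_nonneg_nonneg prod_nonneg\<close>)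

lemma ser_le1: "good \<sigma> sc oc \<Longrightarrow> ser sc oc \<le> 1"
  unfolding ser_def
proof (rule suminf_le_const[OF good_summable])
  fix n assume g: "good \<sigma> sc oc"
  show "(\<Sum>k<n. oc k * (\<Prod>j<k. sc j)) \<le> 1"
    using good_partial[OF g, of n] good_prod_pos[OF g, of n] by simp
qed

lemma partial_nonneg: assumes g: "good \<sigma> sc oc" shows "0 \<le> (\<Sum>k<n. oc k * (\<Prod>j<k. sc j))"
  using good_facts[OF g] by (auto intro!: sum_nonneg mult_nonneg_nonneg prod_nonneg)

lemma ser_low: "good \<sigma> sc oc \<Longrightarrow> (\<Prod>j<n. sc j) * ser (\<lambda>k. sc (k + n)) (\<lambda>k. oc (k + n)) \<le> ser sc oc"
  using ser_split[of \<sigma> sc oc n] partial_nonneg[of \<sigma> sc oc n] by simp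

lemma ser_up: "good \<sigma> sc oc \<Longrightarrow> (\<Prod>j<n. sc j) * (1 - ser (\<lambda>k. sc (k + n)) (\<lambda>k. oc (k + n))) \<le> 1 - ser sc oc"
  using ser_split[of \<sigma> sc oc n] good_partial[of \<sigma> sc oc n] by (simp add: algebra_simps)

lemma ser_prefix:
  assumes g: "good \<sigma> sc oc" and g': "good \<sigma>' sc' oc'"
    and eq: "\<forall>j<k. sc j = sc' j \<and> oc j = oc' j"
  shows "ser sc' oc' - ser sc oc = (\<Prod>j<k. sc j) * (ser (\<lambda>i. sc' (i + k)) (\<lambda>i. oc' (i + k)) - ser (\<lambda>i. sc (i + k)) (\<lambda>i. oc (i + k)))"
proof -
  have A: "(\<Sum>i<k. oc i * (\<Prod>j<i. sc j)) = (\<Sum>i<k. oc' i * (\<Prod>j<i. sc' j))"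
    using eq by (intro sum.cong refl arg_cong2[where f="(*)"] prod.cong) auto
  have P: "(\<Prod>j<k. sc j) = (\<Prod>j<k. sc' j)"
    using eq by (intro prod.cong) auto
  show ?thesis
    using ser_split[OF g, of k] ser_split[OF g', of k] A P by (simp add: algebra_simps)
qed


lemma ser_tail_up:
  assumes g: "good \<sigma> sc oc" and kN: "k < N"
  shows "(\<Prod>j<N. sc j) * (1 - ser (\<lambda>i. sc (i + N)) (\<lambda>i. oc (i + N)))
     \<le> (\<Prod>j<Suc k. sc j) * (1 - ser (\<lambda>i. sc (i + Suc k)) (\<lambda>i. oc (i + Suc k)))"
proof -
  define m where "m = N - Suc k"
  have N: "N = Suc k + m" using kN m_def by simp
  have gs: "good \<sigma> (\<lambda>i. sc (i + Suc k)) (\<lambda>i. oc (i + Suc k))" by (rule good_sh[OF g])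
  have u: "(\<Prod>j<m. sc (j + Suc k)) * (1 - ser (\<lambda>i. sc (i + m + Suc k)) (\<lambda>i. oc (i + m + Suc k)))
       \<le> 1 - ser (\<lambda>i. sc (i + Suc k)) (\<lambda>i. oc (i + Suc k))"
    using ser_up[OF gs, of m] by simp
  have e: "(\<lambda>i. sc (i + m + Suc k)) = (\<lambda>i. sc (i + N))" "(\<lambda>i. oc (i + m + Suc k)) = (\<lambda>i. oc (i + N))"
    using N by (auto simp: add.assoc add.commute[of m])
  have pp: "(\<Prod>j<N. sc j) = (\<Prod>j<Suc k. sc j) * (\<Prod>j<m. sc (j + Suc k))"
    unfolding N by (rule prod_split)
  have "0 \<le> (\<Prod>j<Suc k. sc j)" using good_prod_pos[OF g] less_imp_le by blast
  from mult_left_mono[OF u[unfolded e] this] show ?thesis unfolding pp by (simp only: mult.assoc)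
qed

lemma ser_tail_low:
  assumes g: "good \<sigma> sc oc" and kN: "k < N"
  shows "(\<Prod>j<N. sc j) * ser (\<lambda>i. sc (i + N)) (\<lambda>i. oc (i + N))
     \<le> (\<Prod>j<Suc k. sc j) * ser (\<lambda>i. sc (i + Suc k)) (\<lambda>i. oc (i + Suc k))"
proof -
  define m where "m = N - Suc k"
  have N: "N = Suc k + m" using kN m_def by simp
  have gs: "good \<sigma> (\<lambda>i. sc (i + Suc k)) (\<lambda>i. oc (i + Suc k))" by (rule good_sh[OF g])
  have u: "(\<Prod>j<m. sc (j + Suc k)) * ser (\<lambda>i. sc (i + m + Suc k)) (\<lambda>i. oc (i + m + Suc k))
       \<le> ser (\<lambda>i. sc (i + Suc k)) (\<lambda>i. oc (i + Suc k))"
    using ser_low[OF gs, of m] by simp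
  have e: "(\<lambda>i. sc (i + m + Suc k)) = (\<lambda>i. sc (i + N))" "(\<lambda>i. oc (i + m + Suc k)) = (\<lambda>i. oc (i + N))"
    using N by (auto simp: add.assoc add.commute[of m])
  have pp: "(\<Prod>j<N. sc j) = (\<Prod>j<Suc k. sc j) * (\<Prod>j<m. sc (j + Suc k))"
    unfolding N by (rule prod_split)
  have "0 \<le> (\<Prod>j<Suc k. sc j)" using good_prod_pos[OF g] less_imp_le by blast
  from mult_left_mono[OF u[unfolded e] this] show ?thesis unfolding pp by (simp only: mult.assoc)
qed

lemma sep_up:
  assumes g: "good \<sigma> sc oc" and g': "good \<sigma>' sc' oc'"
    and eq: "\<forall>j<k. sc j = sc' j \<and> oc j = oc' j"
    and gap: "oc k + sc k \<le> oc' k" and kN: "k < N"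
  shows "(\<Prod>j<N. sc j) * (1 - ser (\<lambda>i. sc (i + N)) (\<lambda>i. oc (i + N))) \<le> ser sc' oc' - ser sc oc"
proof -
  have gk: "good \<sigma> (\<lambda>i. sc (i + k)) (\<lambda>i. oc (i + k))" by (rule good_sh[OF g])
  have gk': "good \<sigma>' (\<lambda>i. sc' (i + k)) (\<lambda>i. oc' (i + k))" by (rule good_sh[OF g'])
  have S: "ser (\<lambda>i. sc (i + k)) (\<lambda>i. oc (i + k)) = oc k + sc k * ser (\<lambda>i. sc (i + Suc k)) (\<lambda>i. oc (i + Suc k))"
    using ser_step[OF gk] by simp
  have S': "ser (\<lambda>i. sc' (i + k)) (\<lambda>i. oc' (i + k)) = oc' k + sc' k * ser (\<lambda>i. sc' (i + Suc k)) (\<lambda>i. oc' (i + Suc k))"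
    using ser_step[OF gk'] by simp
  have T': "0 \<le> sc' k * ser (\<lambda>i. sc' (i + Suc k)) (\<lambda>i. oc' (i + Suc k))"
    by (intro mult_nonneg_nonneg good_facts(2)[OF g'] ser_nonneg[OF good_sh[OF g']])
  have D: "sc k * (1 - ser (\<lambda>i. sc (i + Suc k)) (\<lambda>i. oc (i + Suc k)))
     \<le> ser (\<lambda>i. sc' (i + k)) (\<lambda>i. oc' (i + k)) - ser (\<lambda>i. sc (i + k)) (\<lambda>i. oc (i + k))"
    unfolding S S' using T' gap by (simp add: algebra_simps)
  have P0: "0 \<le> (\<Prod>j<k. sc j)" using good_prod_pos[OF g] less_imp_le by blast
  have "(\<Prod>j<Suc k. sc j) * (1 - ser (\<lambda>i. sc (i + Suc k)) (\<lambda>i. oc (i + Suc k)))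
     \<le> ser sc' oc' - ser sc oc"
    unfolding ser_prefix[OF g g' eq] using mult_left_mono[OF D P0] by (simp add: mult.assoc)
  then show ?thesis using ser_tail_up[OF g kN] by linarith
qed

lemma sep_down:
  assumes g: "good \<sigma> sc oc" and g': "good \<sigma>' sc' oc'"
    and eq: "\<forall>j<k. sc j = sc' j \<and> oc j = oc' j"
    and gap: "oc' k + sc' k \<le> oc k" and kN: "k < N"
  shows "(\<Prod>j<N. sc j) * ser (\<lambda>i. sc (i + N)) (\<lambda>i. oc (i + N)) \<le> ser sc oc - ser sc' oc'"
proof -
  have gk: "good \<sigma> (\<lambda>i. sc (i + k)) (\<lambda>i. oc (i + k))" by (rule good_sh[OF g])
  have gk': "good \<sigma>' (\<lambda>i. sc' (i + k)) (\<lambda>i. oc' (i + k))" by (rule good_sh[OF g'])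
  have S: "ser (\<lambda>i. sc (i + k)) (\<lambda>i. oc (i + k)) = oc k + sc k * ser (\<lambda>i. sc (i + Suc k)) (\<lambda>i. oc (i + Suc k))"
    using ser_step[OF gk] by simp
  have S': "ser (\<lambda>i. sc' (i + k)) (\<lambda>i. oc' (i + k)) = oc' k + sc' k * ser (\<lambda>i. sc' (i + Suc k)) (\<lambda>i. oc' (i + Suc k))"
    using ser_step[OF gk'] by simp
  have T': "sc' k * ser (\<lambda>i. sc' (i + Suc k)) (\<lambda>i. oc' (i + Suc k)) \<le> sc' k"
    by (intro mult_left_le good_facts(2)[OF g'] ser_le1[OF good_sh[OF g']])
  have D: "sc k * ser (\<lambda>i. sc (i + Suc k)) (\<lambda>i. oc (i + Suc k))
     \<le> ser (\<lambda>i. sc (i + k)) (\<lambda>i. oc (i + k)) - ser (\<lambda>i. sc' (i + k)) (\<lambda>i. oc' (i + k))"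
    unfolding S S' using T' gap by (simp add: algebra_simps)
  have P0: "0 \<le> (\<Prod>j<k. sc j)" using good_prod_pos[OF g] less_imp_le by blast
  have eq2: "\<forall>j<k. sc' j = sc j \<and> oc' j = oc j" using eq by auto
  have "(\<Prod>j<Suc k. sc j) * ser (\<lambda>i. sc (i + Suc k)) (\<lambda>i. oc (i + Suc k))
     \<le> ser sc oc - ser sc' oc'"
  proof -
    have "ser sc oc - ser sc' oc' = (\<Prod>j<k. sc j) * (ser (\<lambda>i. sc (i + k)) (\<lambda>i. oc (i + k)) - ser (\<lambda>i. sc' (i + k)) (\<lambda>i. oc' (i + k)))"
      using ser_prefix[OF g g' eq] by (simp add: algebra_simps)
    then show ?thesis using mult_left_mono[OF D P0] by (simp add: mult.assoc)
  qed
  then show ?thesis using ser_tail_low[OF g kN] by linarith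
qed

lemma comp_meas: "(\<lambda>w::nat\<Rightarrow>nat\<times>nat. h (w k) :: real) \<in> borel_measurable borel"
proof -
  have 1: "(\<lambda>w::nat\<Rightarrow>nat\<times>nat. w k) \<in> borel_measurable borel"
    by (rule borel_measurable_continuous_onI) simp
  have 2: "h \<in> borel_measurable (borel :: (nat \<times> nat) measure)"
    by (simp add: measurable_def sets_borel_eq_count_space space_borel)
  show ?thesis using measurable_comp[OF 1 2] by (simp add: o_def)
qed

lemma chain_mono:
  fixes f :: "nat \<Rightarrow> real"
  assumes "\<forall>j. lo \<le> j \<and> j < hi \<longrightarrow> f j \<le> f (j+1)" "lo \<le> i" "i \<le> i'" "i' \<le> hi"
  shows "f i \<le> f i'"
  using assms(3,4)
proof (induction i' rule: dec_induct)
  case base then show ?case by simp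
next
  case (step n)
  then have "f n \<le> f (n+1)" using assms(1,2) by auto
  then show ?case using step by simp
qed

lemma digits_finite: "finite (digits p m)"
proof -
  have "digits p m \<subseteq> {1..p} \<times> {1..Max (m ` {1..p})}"
  proof (clarsimp simp: digits_def)
    fix i j assume h: "Suc 0 \<le> i" "i \<le> p" "Suc 0 \<le> j" "j \<le> m i"
    have "m i \<le> Max (m ` {Suc 0..p})" using h by (intro Max_ge) auto
    then show "j \<le> Max (m ` {Suc 0..p})" using h by linarith
  qed
  then show ?thesis by (rule finite_subset) auto
qed

definition Xsc where "Xsc a w = (\<lambda>k. a (fst (w k)) (snd (w k)))"
definition Xoc where "Xoc c w = (\<lambda>k. c (fst (w k)) (snd (w k)))"
definition Ysc where "Ysc b w = (\<lambda>k. b (fst (w k)))"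
definition Yoc where "Yoc d w = (\<lambda>k. d (fst (w k)))"

locale lg =
  fixes p :: nat and m :: "nat \<Rightarrow> nat" and a c :: "nat \<Rightarrow> nat \<Rightarrow> real" and b d :: "nat \<Rightarrow> real"
  assumes LG: "LG_system p m a b c d"
begin

lemma LGd: "p \<ge> 1" "\<forall>i\<in>{1..p}. m i \<ge> 1"
     "\<forall>(i, j)\<in>digits p m. 0 < a i j \<and> a i j \<le> b i \<and> b i < 1"
     "0 \<le> d 1" "\<forall>i\<in>{1..<p}. d i \<le> d (i + 1)" "d p < 1"
     "\<forall>i\<in>{1..<p}. d (i + 1) - d i \<ge> b i" "b p + d p \<le> 1"
     "\<forall>i\<in>{1..p}. 0 \<le> c i 1 \<and> (\<forall>j\<in>{1..<m i}. c i j \<le> c i (j + 1)) \<and> c i (m i) < 1 \<and>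
        (\<forall>j\<in>{1..<m i}. c i (j + 1) - c i j \<ge> a i j) \<and> a i (m i) + c i (m i) \<le> 1"
  using LG unfolding LG_system_def by blast+

lemma p1: "p \<ge> 1" by (rule LGd(1))
lemma m1: "i \<in> {1..p} \<Longrightarrow> m i \<ge> 1" using LGd(2) by blast

lemma dig_ab: "(i, j) \<in> digits p m \<Longrightarrow> 0 < a i j \<and> a i j \<le> b i \<and> b i < 1"
  using LGd(3) by blast

lemma dig_range: "(i, j) \<in> digits p m \<longleftrightarrow> i \<in> {1..p} \<and> j \<in> {1..m i}"
  by (auto simp: digits_def)

lemma row_dig: "i \<in> {1..p} \<Longrightarrow> (i, 1) \<in> digits p m"
  using m1 by (auto simp: digits_def)

lemma b_pos: "i \<in> {1..p} \<Longrightarrow> 0 < b i"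
  using dig_ab[OF row_dig] by force

lemma b_lt1: "i \<in> {1..p} \<Longrightarrow> b i < 1"
  using dig_ab[OF row_dig] by force

lemma d_step: "i \<in> {1..<p} \<Longrightarrow> d i + b i \<le> d (i+1)"
  using LGd(7) by fastforce

lemma d_mono: "1 \<le> i \<Longrightarrow> i \<le> i' \<Longrightarrow> i' \<le> p \<Longrightarrow> d i \<le> d i'"
  by (rule chain_mono[where lo=1 and hi=p]) (use LGd(5) in auto)

lemma d_gap: assumes "1 \<le> i" "i < i'" "i' \<le> p" shows "d i + b i \<le> d i'"
proof -
  have "d (i+1) \<le> d i'" using assms by (intro d_mono) auto
  then show ?thesis using d_step[of i] assms by auto
qed

lemma d_nonneg: assumes "i \<in> {1..p}" shows "0 \<le> d i"
  using d_mono[of 1 i] assms LGd(4) by auto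

lemma db_le1: assumes "i \<in> {1..p}" shows "d i + b i \<le> 1"
proof (cases "i = p")
  case True then show ?thesis using LGd(8) by auto
next
  case False
  then have "d i + b i \<le> d p" using assms by (intro d_gap) auto
  moreover have "b p + d p \<le> 1" "0 < b p" using LGd(8) b_pos[of p] p1 by auto
  ultimately show ?thesis by linarith
qed

lemma dp_lt1: "d p < 1" by (rule LGd(6))

lemma LGc: assumes "i \<in> {1..p}"
  shows "0 \<le> c i 1" "\<forall>j\<in>{1..<m i}. c i j \<le> c i (j + 1)" "c i (m i) < 1"
        "\<forall>j\<in>{1..<m i}. c i (j + 1) - c i j \<ge> a i j" "a i (m i) + c i (m i) \<le> 1"
  using LGd(9) assms by blast+

lemma c_step: "i \<in> {1..p} \<Longrightarrow> j \<in> {1..<m i} \<Longrightarrow> c i j + a i j \<le> c i (j+1)"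
  using LGc(4)[of i] by fastforce

lemma c_mono: "i \<in> {1..p} \<Longrightarrow> 1 \<le> j \<Longrightarrow> j \<le> j' \<Longrightarrow> j' \<le> m i \<Longrightarrow> c i j \<le> c i j'"
  by (rule chain_mono[where lo=1 and hi="m i"]) (use LGc(2)[of i] in auto)

lemma c_gap: assumes "i \<in> {1..p}" "1 \<le> j" "j < j'" "j' \<le> m i" shows "c i j + a i j \<le> c i j'"
proof -
  have "c i (j+1) \<le> c i j'" using assms by (intro c_mono) auto
  then show ?thesis using c_step[of i j] assms by auto
qed

lemma c_nonneg: assumes "(i,j) \<in> digits p m" shows "0 \<le> c i j"
  using c_mono[of i 1 j] LGc(1)[of i] assms by (auto simp: digits_def)

lemma ca_le1: assumes "(i,j) \<in> digits p m" shows "c i j + a i j \<le> 1"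
proof (cases "j = m i")
  case True then show ?thesis using LGc(5)[of i] assms by (auto simp: digits_def)
next
  case False
  then have "c i j + a i j \<le> c i (m i)" using assms by (intro c_gap) (auto simp: digits_def)
  moreover have i: "i \<in> {1..p}" using assms by (auto simp: digits_def)
  moreover have "(i, m i) \<in> digits p m" using i m1[OF i] by (auto simp: digits_def)
  ultimately show ?thesis using LGc(5)[OF i] dig_ab[of i "m i"] by linarith
qed

lemma cm_lt1: "i \<in> {1..p} \<Longrightarrow> c i (m i) < 1" using LGc(3) by blast

definition \<sigma> where "\<sigma> = Max (b ` {1..p})"

lemma sigma_lt1: "\<sigma> < 1"
  unfolding \<sigma>_def using p1 b_lt1 by (subst Max_less_iff) auto

lemma b_le_sigma: "i \<in> {1..p} \<Longrightarrow> b i \<le> \<sigma>"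
  unfolding \<sigma>_def by (rule Max_ge) auto

lemma good_X: assumes "w \<in> SigmaD p m" shows "good \<sigma> (Xsc a w) (Xoc c w)"
  unfolding good_def Xsc_def Xoc_def
proof (intro conjI allI sigma_lt1)
  fix k
  have dk: "(fst (w k), snd (w k)) \<in> digits p m" using assms by (simp add: SigmaD_def)
  then have r: "fst (w k) \<in> {1..p}" by (cases "w k") (auto simp: digits_def)
  show "0 < a (fst (w k)) (snd (w k))" using dig_ab[OF dk] by simp
  show "a (fst (w k)) (snd (w k)) \<le> \<sigma>" using dig_ab[OF dk] b_le_sigma[OF r] by simp
  show "0 \<le> c (fst (w k)) (snd (w k))" using c_nonneg[OF dk] .
  show "c (fst (w k)) (snd (w k)) + a (fst (w k)) (snd (w k)) \<le> 1" using ca_le1[OF dk] .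
qed

lemma good_Y: assumes "w \<in> SigmaD p m" shows "good \<sigma> (Ysc b w) (Yoc d w)"
  unfolding good_def Ysc_def Yoc_def
proof (intro conjI allI sigma_lt1)
  fix k
  have dk: "(fst (w k), snd (w k)) \<in> digits p m" using assms by (simp add: SigmaD_def)
  then have r: "fst (w k) \<in> {1..p}" by (cases "w k") (auto simp: digits_def)
  show "0 < b (fst (w k))" using b_pos[OF r] .
  show "b (fst (w k)) \<le> \<sigma>" using b_le_sigma[OF r] .
  show "0 \<le> d (fst (w k))" using d_nonneg[OF r] .
  show "d (fst (w k)) + b (fst (w k)) \<le> 1" using db_le1[OF r] .
qed

end

lemma Scomp_formula:
  "Scomp a b c d w n z =
    ((\<Prod>j<n. Xsc a w j) * fst z + (\<Sum>k<n. Xoc c w k * (\<Prod>j<k. Xsc a w j)),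
     (\<Prod>j<n. Ysc b w j) * snd z + (\<Sum>k<n. Yoc d w k * (\<Prod>j<k. Ysc b w j)))"
  by (induction n arbitrary: z) (simp_all add: Smap_def Xsc_def Xoc_def Ysc_def Yoc_def algebra_simps)

lemma zero_of_pow:
  fixes t s :: real
  assumes "0 \<le> s" "s < 1" "\<And>n. \<bar>t\<bar> \<le> s ^ n"
  shows "t = 0"
proof -
  have "(\<lambda>n. s ^ n) \<longlonglongrightarrow> 0" using assms by (intro LIMSEQ_power_zero) auto
  then have "\<bar>t\<bar> \<le> 0" using assms(3) by (intro LIMSEQ_le_const) auto
  then show ?thesis by simp
qed

context lg begin

definition X :: "(nat \<Rightarrow> nat \<times> nat) \<Rightarrow> real" where "X w = ser (Xsc a w) (Xoc c w)"
definition Y :: "(nat \<Rightarrow> nat \<times> nat) \<Rightarrow> real" where "Y w = ser (Ysc b w) (Yoc d w)"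

lemma sigma_nonneg: "0 \<le> \<sigma>"
  using b_le_sigma[of 1] b_pos[of 1] p1 by auto

lemma approx_fst:
  assumes g: "good \<sigma> sc oc" and u: "0 \<le> u" "u \<le> 1"
  shows "\<bar>(\<Prod>j<n. sc j) * u + (\<Sum>k<n. oc k * (\<Prod>j<k. sc j)) - ser sc oc\<bar> \<le> \<sigma> ^ n"
proof -
  let ?t = "ser (\<lambda>k. sc (k + n)) (\<lambda>k. oc (k + n))"
  have t: "0 \<le> ?t" "?t \<le> 1" using ser_nonneg[OF good_sh[OF g]] ser_le1[OF good_sh[OF g]] by auto
  have e: "(\<Prod>j<n. sc j) * u + (\<Sum>k<n. oc k * (\<Prod>j<k. sc j)) - ser sc oc = (\<Prod>j<n. sc j) * (u - ?t)"
    using ser_split[OF g, of n] by (simp add: algebra_simps)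
  have "\<bar>u - ?t\<bar> \<le> 1" using t u by auto
  then have "\<bar>(\<Prod>j<n. sc j) * (u - ?t)\<bar> \<le> (\<Prod>j<n. sc j)"
    using good_prod_pos[OF g, of n] by (simp add: abs_mult mult_left_le)
  then show ?thesis unfolding e using good_prod_le[OF g, of n] by linarith
qed

lemma coding_eq:
  assumes w: "w \<in> SigmaD p m"
  shows "coding a b c d w = (X w, Y w)"
  unfolding coding_def
proof (rule the_equality)
  have gX: "good \<sigma> (Xsc a w) (Xoc c w)" by (rule good_X[OF w])
  have gY: "good \<sigma> (Ysc b w) (Yoc d w)" by (rule good_Y[OF w])
  show "(X w, Y w) \<in> (\<Inter>n. Scomp a b c d w n ` unit_square)"
  proof (intro InterI, clarify)
    fix n
    let ?u = "(ser (\<lambda>k. Xsc a w (k + n)) (\<lambda>k. Xoc c w (k + n)), ser (\<lambda>k. Ysc b w (k + n)) (\<lambda>k. Yoc d w (k + n)))"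
    have "?u \<in> unit_square"
      unfolding unit_square_def
      using ser_nonneg[OF good_sh[OF gX]] ser_le1[OF good_sh[OF gX]]
        ser_nonneg[OF good_sh[OF gY]] ser_le1[OF good_sh[OF gY]] by auto
    moreover have "(X w, Y w) = Scomp a b c d w n ?u"
      unfolding Scomp_formula X_def Y_def using ser_split[OF gX, of n] ser_split[OF gY, of n]
      by (simp add: algebra_simps)
    ultimately show "(X w, Y w) \<in> Scomp a b c d w n ` unit_square" by blast
  qed
  fix z assume z: "z \<in> (\<Inter>n. Scomp a b c d w n ` unit_square)"
  have "\<bar>fst z - X w\<bar> \<le> \<sigma> ^ n \<and> \<bar>snd z - Y w\<bar> \<le> \<sigma> ^ n" for n
  proof -
    obtain u where u: "u \<in> unit_square" "z = Scomp a b c d w n u" using z by blast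
    have u01: "0 \<le> fst u" "fst u \<le> 1" "0 \<le> snd u" "snd u \<le> 1"
      using u(1) by (auto simp: unit_square_def)
    show ?thesis
      using approx_fst[OF gX u01(1,2), of n] approx_fst[OF gY u01(3,4), of n]
      unfolding u(2) Scomp_formula X_def Y_def by simp
  qed
  then have "fst z - X w = 0" "snd z - Y w = 0"
    using zero_of_pow[OF sigma_nonneg sigma_lt1, of "fst z - X w"]
      zero_of_pow[OF sigma_nonneg sigma_lt1, of "snd z - Y w"] by auto
  then show "z = (X w, Y w)" by (simp add: prod_eq_iff)
qed

end

lemma coord_meas: "(\<lambda>w::nat\<Rightarrow>nat\<times>nat. w k) \<in> measurable borel borel"
  by (rule borel_measurable_continuous_onI) simp

lemma comp_pred: "{w::nat\<Rightarrow>nat\<times>nat. P (w k)} \<in> sets borel"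
proof -
  have "{x::nat\<times>nat. P x} \<in> sets borel" by (simp add: sets_borel_eq_count_space)
  from measurable_sets[OF coord_meas[of k] this]
  have "(\<lambda>w::nat\<Rightarrow>nat\<times>nat. w k) -` {x. P x} \<inter> space borel \<in> sets borel" .
  moreover have "(\<lambda>w::nat\<Rightarrow>nat\<times>nat. w k) -` {x. P x} \<inter> space borel = {w. P (w k)}"
    by (auto simp: space_borel)
  ultimately show ?thesis by simp
qed

lemma finite_pred: "{w::nat\<Rightarrow>nat\<times>nat. \<forall>k<N. Q k (w k)} \<in> sets borel"
proof (induction N)
  case 0
  have E: "{w::nat\<Rightarrow>nat\<times>nat. \<forall>k<0. Q k (w k)} = space borel" by (simp add: space_borel)
  show ?case unfolding E by (rule sets.top)
next
  case (Suc N)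
  have E: "{w::nat\<Rightarrow>nat\<times>nat. \<forall>k<Suc N. Q k (w k)} = {w. \<forall>k<N. Q k (w k)} \<inter> {w. Q N (w N)}"
    by (auto simp: less_Suc_eq)
  show ?case unfolding E by (rule sets.Int[OF Suc comp_pred])
qed

locale lgm = lg +
  fixes \<mu> :: "(nat \<Rightarrow> nat \<times> nat) measure"
  assumes sets_mu: "sets \<mu> = sets (restrict_space borel (SigmaD p m))"
    and fin: "finite_measure \<mu>"
begin

lemma space_mu: "space \<mu> = SigmaD p m"
  using sets_eq_imp_space_eq[OF sets_mu] by (simp add: space_restrict_space space_borel)

lemma X_meas: "X \<in> borel_measurable borel"
  unfolding X_def[abs_def] ser_def Xsc_def Xoc_def
  by (intro borel_measurable_suminf borel_measurable_times borel_measurable_prod comp_meas)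

lemma Y_meas: "Y \<in> borel_measurable borel"
proof -
  have 1: "\<And>k. (\<lambda>x::nat\<Rightarrow>nat\<times>nat. d (fst (x k))) \<in> borel_measurable borel"
    using comp_meas[of "\<lambda>v. d (fst v)"] by simp
  have 2: "\<And>k. (\<lambda>x::nat\<Rightarrow>nat\<times>nat. b (fst (x k))) \<in> borel_measurable borel"
    using comp_meas[of "\<lambda>v. b (fst v)"] by simp
  show ?thesis unfolding Y_def[abs_def] ser_def Ysc_def Yoc_def
    by (intro borel_measurable_suminf borel_measurable_times borel_measurable_prod 1 2)
qed

lemma coding_meas: "coding a b c d \<in> measurable \<mu> borel"
proof -
  have "(\<lambda>w. (X w, Y w)) \<in> borel_measurable borel"
    by (intro borel_measurable_Pair X_meas Y_meas)
  then have "(\<lambda>w. (X w, Y w)) \<in> measurable (restrict_space borel (SigmaD p m)) borel"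
    by (rule measurable_restrict_space1)
  then have "(\<lambda>w. (X w, Y w)) \<in> measurable \<mu> borel"
  proof -
    have "measurable \<mu> (borel::(real\<times>real) measure) = measurable (restrict_space borel (SigmaD p m)) borel"
      by (rule measurable_cong_sets[OF sets_mu refl])
    then show ?thesis using \<open>(\<lambda>w. (X w, Y w)) \<in> measurable (restrict_space borel (SigmaD p m)) borel\<close> by simp
  qed
  then show ?thesis
    using measurable_cong[of \<mu> "coding a b c d" "\<lambda>w. (X w, Y w)"] coding_eq space_mu by auto
qed

lemma sq_sets: "approx_square p m a b n w \<in> sets \<mu>"
proof -
  define L where "L = Lfun a b n w"
  define Q where "Q = (\<lambda>k (v::nat\<times>nat). if k < L then v = w k else fst v = fst (w k))"
  have iff: "(\<forall>k<max L n. Q k (w' k)) \<longleftrightarrow> (\<forall>k<L. w' k = w k) \<and> (\<forall>k. L \<le> k \<and> k < n \<longrightarrow> fst (w' k) = fst (w k))" for w'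
  proof
    assume h: "\<forall>k<max L n. Q k (w' k)"
    show "(\<forall>k<L. w' k = w k) \<and> (\<forall>k. L \<le> k \<and> k < n \<longrightarrow> fst (w' k) = fst (w k))"
    proof (intro conjI allI impI)
      fix k assume k: "k < L"
      then have "Q k (w' k)" using h by simp
      then show "w' k = w k" using k unfolding Q_def by simp
    next
      fix k assume k: "L \<le> k \<and> k < n"
      then have "Q k (w' k)" using h by simp
      then show "fst (w' k) = fst (w k)" using k unfolding Q_def by simp
    qed
  next
    assume h: "(\<forall>k<L. w' k = w k) \<and> (\<forall>k. L \<le> k \<and> k < n \<longrightarrow> fst (w' k) = fst (w k))"
    show "\<forall>k<max L n. Q k (w' k)"
    proof (intro allI impI)
      fix k assume k: "k < max L n"
      show "Q k (w' k)"
      proof (cases "k < L")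
        case True then show ?thesis using h unfolding Q_def by simp
      next
        case False then show ?thesis using h k unfolding Q_def by simp
      qed
    qed
  qed
  have "approx_square p m a b n w = SigmaD p m \<inter> {w'. \<forall>k<max L n. Q k (w' k)}"
    unfolding approx_square_def L_def[symmetric] using iff by blast
  then show ?thesis unfolding sets_mu sets_restrict_space using finite_pred by blast
qed

lemma nu_measure:
  assumes "A \<in> sets borel"
  shows "measure (distr \<mu> borel (coding a b c d)) A = measure \<mu> (coding a b c d -` A \<inter> SigmaD p m)"
  using measure_distr[OF coding_meas assms] space_mu by simp

lemma mu_le_total: "measure \<mu> A \<le> measure \<mu> (space \<mu>)"
proof -
  interpret finite_measure \<mu> by (rule fin)
  show ?thesis
    by (cases "A \<in> sets \<mu>") (auto simp: measure_notin_sets intro!: bounded_measure)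
qed

lemma mu_mono: "A \<in> sets \<mu> \<Longrightarrow> B \<subseteq> A \<Longrightarrow> measure \<mu> B \<le> measure \<mu> A"
proof -
  interpret finite_measure \<mu> by (rule fin)
  assume "A \<in> sets \<mu>" "B \<subseteq> A"
  then show ?thesis
    by (cases "B \<in> sets \<mu>") (auto simp: measure_notin_sets intro!: finite_measure_mono)
qed

end

lemma prod_lower:
  fixes sc :: "nat \<Rightarrow> real"
  assumes b: "\<And>j. lo \<le> sc j" "\<And>j. sc j \<le> 1" and lo: "0 \<le> lo" "lo \<le> 1"
    and nN: "n \<le> N" "N \<le> n + M"
  shows "(\<Prod>j<n. sc j) * lo ^ M \<le> (\<Prod>j<N. sc j)"
proof -
  have sc0: "0 \<le> sc j" for j using b(1)[of j] lo by linarith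
  have pp: "(\<Prod>j<N. sc j) = (\<Prod>j<n. sc j) * (\<Prod>j<N-n. sc (j + n))"
    using prod_split[where n=n and m="N - n" and f=sc] nN by simp
  have "lo ^ M \<le> lo ^ (N - n)" using lo nN by (intro power_decreasing) auto
  also have "\<dots> = (\<Prod>j<N-n. lo)" by simp
  also have "\<dots> \<le> (\<Prod>j<N-n. sc (j + n))" using lo b by (intro prod_mono) auto
  finally have "(\<Prod>j<n. sc j) * lo ^ M \<le> (\<Prod>j<n. sc j) * (\<Prod>j<N-n. sc (j + n))"
    using sc0 by (intro mult_left_mono prod_nonneg) auto
  then show ?thesis using pp by simp
qed

lemma ser_diff_le:
  assumes g: "good \<sigma> sc oc" and g': "good \<sigma>' sc' oc'"
    and eq: "\<forall>j<k. sc j = sc' j \<and> oc j = oc' j"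
  shows "\<bar>ser sc' oc' - ser sc oc\<bar> \<le> (\<Prod>j<k. sc j)"
proof -
  let ?s = "ser (\<lambda>i. sc (i + k)) (\<lambda>i. oc (i + k))" and ?s' = "ser (\<lambda>i. sc' (i + k)) (\<lambda>i. oc' (i + k))"
  have "0 \<le> ?s" "?s \<le> 1" "0 \<le> ?s'" "?s' \<le> 1"
    using ser_nonneg[OF good_sh[OF g]] ser_le1[OF good_sh[OF g]]
      ser_nonneg[OF good_sh[OF g']] ser_le1[OF good_sh[OF g']] by auto
  then have "\<bar>?s' - ?s\<bar> \<le> 1" by auto
  then have "\<bar>(\<Prod>j<k. sc j) * (?s' - ?s)\<bar> \<le> (\<Prod>j<k. sc j)"
    using good_prod_pos[OF g, of k] by (simp add: abs_mult mult_left_le)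
  then show ?thesis unfolding ser_prefix[OF g g' eq] .
qed

context lg begin

definition amin where "amin = Min ((\<lambda>(i,j). a i j) ` digits p m)"

lemma d11: "(1,1) \<in> digits p m" using row_dig[of 1] p1 by auto

lemma amin_le_a: "(i,j) \<in> digits p m \<Longrightarrow> amin \<le> a i j"
  unfolding amin_def using digits_finite by (force intro: Min_le)

lemma amin_pos: "0 < amin"
proof -
  have "amin \<in> (\<lambda>(i,j). a i j) ` digits p m"
    unfolding amin_def using digits_finite d11 by (intro Min_in) auto
  then show ?thesis using dig_ab by auto
qed

lemma amin_le_b: "i \<in> {1..p} \<Longrightarrow> amin \<le> b i"
  using amin_le_a[OF row_dig] dig_ab[OF row_dig] by force

lemma amin_lt1: "amin < 1"
  using amin_le_b[of 1] b_lt1[of 1] p1 by auto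

lemma wdig: "w \<in> SigmaD p m \<Longrightarrow> (fst (w k), snd (w k)) \<in> digits p m"
  by (simp add: SigmaD_def)

lemma wrow: "w \<in> SigmaD p m \<Longrightarrow> fst (w k) \<in> {1..p}"
  using wdig[of w k] by (auto simp: digits_def)

lemma Xsc_bnd: "w \<in> SigmaD p m \<Longrightarrow> amin \<le> Xsc a w k \<and> Xsc a w k \<le> 1"
  unfolding Xsc_def using amin_le_a[OF wdig] dig_ab[OF wdig] by (smt (verit))

lemma Ysc_bnd: "w \<in> SigmaD p m \<Longrightarrow> amin \<le> Ysc b w k \<and> Ysc b w k \<le> 1"
  unfolding Ysc_def using amin_le_b[OF wrow] b_lt1[OF wrow] by (smt (verit))

lemma aprod_eq: "aprod a w l = (\<Prod>j<l. Xsc a w j)" by (simp add: aprod_def Xsc_def)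
lemma bprod_eq: "bprod b w l = (\<Prod>j<l. Ysc b w j)" by (simp add: bprod_def Ysc_def)

lemma bprod_pos: "w \<in> SigmaD p m \<Longrightarrow> 0 < bprod b w n"
  unfolding bprod_eq using good_prod_pos[OF good_Y] by blast

lemma bprod_le1: "w \<in> SigmaD p m \<Longrightarrow> bprod b w n \<le> 1"
  unfolding bprod_eq using good_prod_le1[OF good_Y] by blast

lemma bprod_le_sigma: "w \<in> SigmaD p m \<Longrightarrow> bprod b w n \<le> \<sigma> ^ n"
  unfolding bprod_eq using good_prod_le[OF good_Y] by blast

lemma bprod_Suc: "bprod b w (Suc n) = bprod b w n * Ysc b w n"
  by (simp add: bprod_eq)

lemma aprod_le_bprod: assumes w: "w \<in> SigmaD p m" shows "aprod a w n \<le> bprod b w n"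
  unfolding aprod_def bprod_def
  using dig_ab[OF wdig[OF w]] by (intro prod_mono) (auto simp: less_imp_le)

lemma aprod_Suc_le: assumes w: "w \<in> SigmaD p m" shows "aprod a w (Suc n) \<le> bprod b w n"
proof -
  have "aprod a w (Suc n) = aprod a w n * Xsc a w n" by (simp add: aprod_eq)
  also have "\<dots> \<le> aprod a w n"
    using Xsc_bnd[OF w, of n] good_prod_pos[OF good_X[OF w], of n] unfolding aprod_eq
    by (simp add: mult_left_le)
  finally show ?thesis using aprod_le_bprod[OF w, of n] by linarith
qed

lemma L_props:
  assumes w: "w \<in> SigmaD p m"
  shows "1 \<le> Lfun a b n w" "aprod a w (Lfun a b n w) \<le> bprod b w n"
    "\<And>l. 1 \<le> l \<Longrightarrow> l < Lfun a b n w \<Longrightarrow> bprod b w n < aprod a w l"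
    "1 \<le> n \<Longrightarrow> Lfun a b n w \<le> n"
proof -
  have ex: "\<exists>l. 1 \<le> l \<and> aprod a w l \<le> bprod b w n"
    using aprod_Suc_le[OF w] by (intro exI[of _ "Suc n"]) auto
  show "1 \<le> Lfun a b n w" "aprod a w (Lfun a b n w) \<le> bprod b w n"
    using LeastI_ex[OF ex] unfolding Lfun_def by auto
  show "bprod b w n < aprod a w l" if "1 \<le> l" "l < Lfun a b n w" for l
    using not_less_Least[of l "\<lambda>l. 1 \<le> l \<and> aprod a w l \<le> bprod b w n"] that
    unfolding Lfun_def by auto
  show "Lfun a b n w \<le> n" if "1 \<le> n"
    unfolding Lfun_def using that aprod_le_bprod[OF w, of n] by (intro Least_le) auto
qed

lemma close_of_square:
  assumes w: "w \<in> SigmaD p m" and w': "w' \<in> approx_square p m a b n w"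
  shows "dist (coding a b c d w') (coding a b c d w) \<le> 2 * bprod b w n"
proof -
  define L where "L = Lfun a b n w"
  have w'S: "w' \<in> SigmaD p m" and agL: "\<forall>k<L. w' k = w k"
    and agn: "\<forall>k. L \<le> k \<and> k < n \<longrightarrow> fst (w' k) = fst (w k)"
    using w' unfolding approx_square_def L_def by auto
  have eqX: "\<forall>j<L. Xsc a w j = Xsc a w' j \<and> Xoc c w j = Xoc c w' j"
    using agL by (simp add: Xsc_def Xoc_def)
  have eqY: "\<forall>j<n. Ysc b w j = Ysc b w' j \<and> Yoc d w j = Yoc d w' j"
  proof -
    have "fst (w' j) = fst (w j)" if "j < n" for j using agL agn that by (cases "j < L") auto
    then show ?thesis by (simp add: Ysc_def Yoc_def)
  qed
  have dX: "\<bar>X w' - X w\<bar> \<le> bprod b w n"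
    using ser_diff_le[OF good_X[OF w] good_X[OF w'S] eqX] L_props(2)[OF w, of n]
    unfolding X_def aprod_eq L_def by linarith
  have dY: "\<bar>Y w' - Y w\<bar> \<le> bprod b w n"
    using ser_diff_le[OF good_Y[OF w] good_Y[OF w'S] eqY]
    unfolding Y_def bprod_eq by linarith
  have "dist (X w', Y w') (X w, Y w) \<le> dist (X w') (X w) + dist (Y w') (Y w)"
    unfolding dist_Pair_Pair by (rule order.trans[OF sqrt_sum_squares_le_sum_abs]) simp
  then show ?thesis
    unfolding coding_eq[OF w] coding_eq[OF w'S] dist_real_def using dX dY by linarith
qed

end

lemma prod_lower2:
  fixes sc :: "nat \<Rightarrow> real"
  assumes b: "\<And>j. lo \<le> sc j" "\<And>j. sc j \<le> 1" and lo: "0 \<le> lo" "lo \<le> 1"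
    and nN: "N \<le> n + M"
  shows "(\<Prod>j<n. sc j) * lo ^ M \<le> (\<Prod>j<N. sc j)"
proof (cases "n \<le> N")
  case True then show ?thesis using prod_lower[OF b lo True nN] by simp
next
  case False
  have sc0: "0 \<le> sc j" for j using b(1)[of j] lo by linarith
  have pp: "(\<Prod>j<n. sc j) = (\<Prod>j<N. sc j) * (\<Prod>j<n-N. sc (j + N))"
    using prod_split[where n=N and m="n - N" and f=sc] False by simp
  have r: "(\<Prod>j<n-N. sc (j + N)) \<le> 1" using sc0 b(2) by (intro prod_le_1) auto
  have "(\<Prod>j<n. sc j) \<le> (\<Prod>j<N. sc j)"
    unfolding pp using r sc0 by (simp add: mult_left_le prod_nonneg)
  moreover have "(\<Prod>j<n. sc j) * lo ^ M \<le> (\<Prod>j<n. sc j)"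
    using lo sc0 by (simp add: mult_left_le prod_nonneg power_le_one)
  ultimately show ?thesis by linarith
qed

locale lg2 = lg +
  assumes td: "two_dimensional p m"
begin

lemma p2: "2 \<le> p"
proof -
  obtain i3 j3 i4 j4 where "(i3, j3) \<in> digits p m" "(i4, j4) \<in> digits p m" "i3 \<noteq> i4"
    using td unfolding two_dimensional_def by blast
  then show ?thesis by (auto simp: digits_def)
qed

lemma ex_i0: "\<exists>i. i \<in> {1..p} \<and> 2 \<le> m i"
proof -
  obtain i1 j1 i2 j2 where "(i1, j1) \<in> digits p m" "(i2, j2) \<in> digits p m" "i1 = i2" "j1 \<noteq> j2"
    using td unfolding two_dimensional_def by blast
  then show ?thesis by (auto simp: digits_def)
qed

definition i0 where "i0 = (SOME i. i \<in> {1..p} \<and> 2 \<le> m i)"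

lemma i0: "i0 \<in> {1..p}" "2 \<le> m i0"
  using someI_ex[OF ex_i0] unfolding i0_def by auto

definition \<kappa> where "\<kappa> = min (min (1 - d p) (b 1)) (min (1 - c i0 (m i0)) (c i0 1 + a i0 1))"

lemma dig_i01: "(i0, 1) \<in> digits p m" using i0 by (auto simp: digits_def)
lemma dig_i0m: "(i0, m i0) \<in> digits p m" using i0 by (auto simp: digits_def)
lemma dig_p1: "(p, 1) \<in> digits p m" using row_dig[of p] p1 by auto

lemma kappa_pos: "0 < \<kappa>"
proof -
  have "0 < 1 - d p" using dp_lt1 by simp
  moreover have "0 < b 1" using b_pos[of 1] p1 by auto
  moreover have "0 < 1 - c i0 (m i0)" using cm_lt1[OF i0(1)] by simp
  moreover have "0 < c i0 1 + a i0 1" using c_nonneg[OF dig_i01] dig_ab[OF dig_i01] by simp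
  ultimately show ?thesis unfolding \<kappa>_def by simp
qed

lemma kappa_le1: "\<kappa> \<le> 1"
  unfolding \<kappa>_def using d_nonneg[of p] p1 by auto

lemma occ:
  assumes rec: "\<forall>j\<le>n. \<forall>dd\<in>digits p m. \<exists>k. j \<le> k \<and> k < j + M \<and> w k = dd"
    and "j \<le> n" "dd \<in> digits p m"
  obtains N where "j \<le> N" "N < j + M" "w N = dd"
  using assms by blast

lemma rows_agree:
  assumes w: "w \<in> SigmaD p m" and w': "w' \<in> SigmaD p m"
    and rec: "\<forall>j\<le>n. \<forall>dd\<in>digits p m. \<exists>k. j \<le> k \<and> k < j + M \<and> w k = dd"
    and close: "\<bar>Y w' - Y w\<bar> < \<kappa> * amin ^ M * bprod b w n"
  shows "\<forall>k<n. fst (w' k) = fst (w k)"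
proof (rule ccontr)
  assume "\<not> (\<forall>k<n. fst (w' k) = fst (w k))"
  then have "\<exists>k. k < n \<and> fst (w' k) \<noteq> fst (w k)" by auto
  then obtain k where k: "k < n" "fst (w' k) \<noteq> fst (w k)"
    and kmin: "\<forall>j<k. \<not> (j < n \<and> fst (w' j) \<noteq> fst (w j))"
    unfolding exists_least_iff[of "\<lambda>k. k < n \<and> fst (w' k) \<noteq> fst (w k)"] by blast
  have eqY: "\<forall>j<k. Ysc b w j = Ysc b w' j \<and> Yoc d w j = Yoc d w' j"
    using kmin k(1) by (simp add: Ysc_def Yoc_def)
  have gY: "good \<sigma> (Ysc b w) (Yoc d w)" and gY': "good \<sigma> (Ysc b w') (Yoc d w')"
    using good_Y[OF w] good_Y[OF w'] .
  have Yb: "amin \<le> Ysc b w j" "Ysc b w j \<le> 1" for j using Ysc_bnd[OF w] by auto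
  have am: "0 \<le> amin" "amin \<le> 1" using amin_pos amin_lt1 by auto
  have kn: "Suc k \<le> n" using k by simp
  define i where "i = fst (w k)"
  define i' where "i' = fst (w' k)"
  have ii: "i \<in> {1..p}" "i' \<in> {1..p}" "i \<noteq> i'" using wrow[OF w] wrow[OF w'] k(2) i_def i'_def by auto
  have bpos: "0 < bprod b w n" by (rule bprod_pos[OF w])
  show False
  proof (cases "i < i'")
    case True
    have gap: "Yoc d w k + Ysc b w k \<le> Yoc d w' k"
      using d_gap[of i i'] True ii unfolding Yoc_def Ysc_def i_def i'_def by auto
    obtain N where N: "Suc k \<le> N" "N < Suc k + M" "w N = (1,1)"
      using occ[OF rec kn d11] by blast
    have sep: "(\<Prod>j<N. Ysc b w j) * (1 - ser (\<lambda>i. Ysc b w (i + N)) (\<lambda>i. Yoc d w (i + N))) \<le> Y w' - Y w"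
      unfolding Y_def by (rule sep_up[OF gY gY' eqY gap]) (use N in simp)
    have st: "ser (\<lambda>i. Ysc b w (i + N)) (\<lambda>i. Yoc d w (i + N))
        = d 1 + b 1 * ser (\<lambda>i. Ysc b w (Suc i + N)) (\<lambda>i. Yoc d w (Suc i + N))"
      using ser_step[OF good_sh[OF gY, of N]] N(3) by (simp add: Ysc_def Yoc_def)
    have s1: "ser (\<lambda>i. Ysc b w (Suc i + N)) (\<lambda>i. Yoc d w (Suc i + N)) \<le> 1"
      using ser_le1[OF good_sh[OF gY, of "Suc N"]] by simp
    have "d 1 + b 1 \<le> d p" using d_gap[of 1 p] p2 by auto
    moreover have "0 < b 1" using b_pos[of 1] p1 by auto
    ultimately have t: "\<kappa> \<le> 1 - ser (\<lambda>i. Ysc b w (i + N)) (\<lambda>i. Yoc d w (i + N))"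
      unfolding st \<kappa>_def using s1 mult_left_le[OF s1, of "b 1"] by linarith
    have pl: "bprod b w n * amin ^ M \<le> (\<Prod>j<N. Ysc b w j)"
      unfolding bprod_eq by (rule prod_lower2[OF Yb am]) (use N kn in simp)
    have "\<kappa> * amin ^ M * bprod b w n \<le> (\<Prod>j<N. Ysc b w j) * (1 - ser (\<lambda>i. Ysc b w (i + N)) (\<lambda>i. Yoc d w (i + N)))"
      using mult_mono[OF pl t] kappa_pos bpos am less_imp_le[OF good_prod_pos[OF gY]] by (simp add: ac_simps)
    then show False using sep close by linarith
  next
    case False
    then have lt: "i' < i" using ii by auto
    have gap: "Yoc d w' k + Ysc b w' k \<le> Yoc d w k"
      using d_gap[of i' i] lt ii unfolding Yoc_def Ysc_def i_def i'_def by auto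
    obtain N where N: "Suc k \<le> N" "N < Suc k + M" "w N = (p,1)"
      using occ[OF rec kn dig_p1] by blast
    have sep: "(\<Prod>j<N. Ysc b w j) * ser (\<lambda>i. Ysc b w (i + N)) (\<lambda>i. Yoc d w (i + N)) \<le> Y w - Y w'"
      unfolding Y_def by (rule sep_down[OF gY gY' eqY gap]) (use N in simp)
    have st: "ser (\<lambda>i. Ysc b w (i + N)) (\<lambda>i. Yoc d w (i + N))
        = d p + b p * ser (\<lambda>i. Ysc b w (Suc i + N)) (\<lambda>i. Yoc d w (Suc i + N))"
      using ser_step[OF good_sh[OF gY, of N]] N(3) by (simp add: Ysc_def Yoc_def)
    have s1: "0 \<le> ser (\<lambda>i. Ysc b w (Suc i + N)) (\<lambda>i. Yoc d w (Suc i + N))"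
      using ser_nonneg[OF good_sh[OF gY, of "Suc N"]] by simp
    have "d 1 + b 1 \<le> d p" using d_gap[of 1 p] p2 by auto
    moreover have "0 < b p" "0 \<le> d 1" using b_pos[of p] d_nonneg[of 1] p1 by auto
    ultimately have t: "\<kappa> \<le> ser (\<lambda>i. Ysc b w (i + N)) (\<lambda>i. Yoc d w (i + N))"
    proof -
      have "0 \<le> b p * ser (\<lambda>i. Ysc b w (Suc i + N)) (\<lambda>i. Yoc d w (Suc i + N))"
        using s1 \<open>0 < b p\<close> by simp
      moreover have "\<kappa> \<le> b 1" unfolding \<kappa>_def by simp
      ultimately show ?thesis unfolding st using \<open>d 1 + b 1 \<le> d p\<close> \<open>0 \<le> d 1\<close> by linarith
    qed
    have pl: "bprod b w n * amin ^ M \<le> (\<Prod>j<N. Ysc b w j)"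
      unfolding bprod_eq by (rule prod_lower2[OF Yb am]) (use N kn in simp)
    have "\<kappa> * amin ^ M * bprod b w n \<le> (\<Prod>j<N. Ysc b w j) * ser (\<lambda>i. Ysc b w (i + N)) (\<lambda>i. Yoc d w (i + N))"
      using mult_mono[OF pl t] kappa_pos bpos am less_imp_le[OF good_prod_pos[OF gY]] by (simp add: ac_simps)
    then show False using sep close by linarith
  qed
qed


lemma aL_lower:
  assumes w: "w \<in> SigmaD p m"
  shows "amin * bprod b w n \<le> aprod a w (Lfun a b n w)"
proof (cases "Lfun a b n w = 1")
  case True
  have "aprod a w 1 = Xsc a w 0" by (simp add: aprod_eq)
  then have "amin \<le> aprod a w 1" using Xsc_bnd[OF w, of 0] by simp
  moreover have "amin * bprod b w n \<le> amin"
    using bprod_le1[OF w] amin_pos by (simp add: mult_left_le)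
  ultimately show ?thesis using True by simp
next
  case False
  define L where "L = Lfun a b n w"
  have L2: "2 \<le> L" using L_props(1)[OF w, of n] False L_def by simp
  have "bprod b w n < aprod a w (L - 1)" using L_props(3)[OF w, of "L - 1" n] L2 L_def by simp
  moreover have "aprod a w L = aprod a w (L - 1) * Xsc a w (L - 1)"
    using L2 by (cases L) (simp_all add: aprod_eq)
  moreover have "amin \<le> Xsc a w (L - 1)" using Xsc_bnd[OF w] by simp
  moreover have "0 < amin" by (rule amin_pos)
  ultimately have "amin * bprod b w n \<le> aprod a w L"
  proof -
    assume h: "bprod b w n < aprod a w (L - 1)" "aprod a w L = aprod a w (L - 1) * Xsc a w (L - 1)"
      "amin \<le> Xsc a w (L - 1)" "0 < amin"
    have "bprod b w n * amin \<le> aprod a w (L - 1) * Xsc a w (L - 1)"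
      using h bprod_pos[OF w, of n] by (intro mult_mono) auto
    then show ?thesis using h(2) by (simp add: mult.commute)
  qed
  then show ?thesis by (simp add: L_def)
qed

lemma cols_agree:
  assumes w: "w \<in> SigmaD p m" and w': "w' \<in> SigmaD p m"
    and rec: "\<forall>j\<le>n. \<forall>dd\<in>digits p m. \<exists>k. j \<le> k \<and> k < j + M \<and> w k = dd"
    and rows: "\<forall>k<n. fst (w' k) = fst (w k)" and n1: "1 \<le> n"
    and close: "\<bar>X w' - X w\<bar> < \<kappa> * amin ^ Suc M * bprod b w n"
  shows "\<forall>k<Lfun a b n w. w' k = w k"
proof (rule ccontr)
  define L where "L = Lfun a b n w"
  have Ln: "L \<le> n" using L_props(4)[OF w n1] L_def by simp
  assume "\<not> (\<forall>k<Lfun a b n w. w' k = w k)"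
  then have "\<exists>k. k < L \<and> w' k \<noteq> w k" unfolding L_def by auto
  then obtain k where k: "k < L" "w' k \<noteq> w k"
    and kmin: "\<forall>j<k. \<not> (j < L \<and> w' j \<noteq> w j)"
    unfolding exists_least_iff[of "\<lambda>k. k < L \<and> w' k \<noteq> w k"] by blast
  have eqX: "\<forall>j<k. Xsc a w j = Xsc a w' j \<and> Xoc c w j = Xoc c w' j"
    using kmin k(1) by (simp add: Xsc_def Xoc_def)
  have gX: "good \<sigma> (Xsc a w) (Xoc c w)" and gX': "good \<sigma> (Xsc a w') (Xoc c w')"
    using good_X[OF w] good_X[OF w'] .
  have Xb: "amin \<le> Xsc a w j" "Xsc a w j \<le> 1" for j using Xsc_bnd[OF w] by auto
  have am: "0 \<le> amin" "amin \<le> 1" using amin_pos amin_lt1 by auto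
  have kn: "Suc k \<le> n" using k Ln by simp
  define i where "i = fst (w k)"
  have ri: "fst (w' k) = i" using rows k Ln i_def by simp
  define j where "j = snd (w k)"
  define j' where "j' = snd (w' k)"
  have jj: "j \<noteq> j'"
  proof
    assume "j = j'"
    then have "w' k = w k" using ri unfolding i_def j_def j'_def by (simp add: prod_eq_iff)
    then show False using k(2) by simp
  qed
  have dj: "(i, j) \<in> digits p m" "(i, j') \<in> digits p m"
    using wdig[OF w, of k] wdig[OF w', of k] ri i_def j_def j'_def by auto
  have ir: "i \<in> {1..p}" "1 \<le> j" "j \<le> m i" "1 \<le> j'" "j' \<le> m i" using dj by (auto simp: digits_def)
  have bpos: "0 < bprod b w n" by (rule bprod_pos[OF w])
  have aL: "amin * bprod b w n \<le> (\<Prod>j<L. Xsc a w j)" using aL_lower[OF w, of n] L_def aprod_eq by simp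
  have m2: "1 < m i0" using i0 by simp
  show False
  proof (cases "j < j'")
    case True
    have gap: "Xoc c w k + Xsc a w k \<le> Xoc c w' k"
      using c_gap[of i j j'] True ir ri unfolding Xoc_def Xsc_def i_def j_def j'_def by auto
    obtain N where N: "Suc k \<le> N" "N < Suc k + M" "w N = (i0,1)"
      using occ[OF rec kn dig_i01] by blast
    have sep: "(\<Prod>j<N. Xsc a w j) * (1 - ser (\<lambda>i. Xsc a w (i + N)) (\<lambda>i. Xoc c w (i + N))) \<le> X w' - X w"
      unfolding X_def by (rule sep_up[OF gX gX' eqX gap]) (use N in simp)
    have st: "ser (\<lambda>i. Xsc a w (i + N)) (\<lambda>i. Xoc c w (i + N))
        = c i0 1 + a i0 1 * ser (\<lambda>i. Xsc a w (Suc i + N)) (\<lambda>i. Xoc c w (Suc i + N))"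
      using ser_step[OF good_sh[OF gX, of N]] N(3) by (simp add: Xsc_def Xoc_def)
    have s1: "ser (\<lambda>i. Xsc a w (Suc i + N)) (\<lambda>i. Xoc c w (Suc i + N)) \<le> 1"
      using ser_le1[OF good_sh[OF gX, of "Suc N"]] by simp
    have "c i0 1 + a i0 1 \<le> c i0 (m i0)" using c_gap[of i0 1 "m i0"] i0 m2 by auto
    moreover have "0 < a i0 1" using dig_ab[OF dig_i01] by auto
    ultimately have t: "\<kappa> \<le> 1 - ser (\<lambda>i. Xsc a w (i + N)) (\<lambda>i. Xoc c w (i + N))"
      unfolding st \<kappa>_def using s1 mult_left_le[OF s1, of "a i0 1"] by linarith
    have pl: "(\<Prod>j<L. Xsc a w j) * amin ^ M \<le> (\<Prod>j<N. Xsc a w j)"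
      by (rule prod_lower2[OF Xb am]) (use N k in simp)
    have "\<kappa> * amin ^ Suc M * bprod b w n \<le> (\<Prod>j<N. Xsc a w j) * (1 - ser (\<lambda>i. Xsc a w (i + N)) (\<lambda>i. Xoc c w (i + N)))"
    proof -
      have "amin * bprod b w n * amin ^ M \<le> (\<Prod>j<L. Xsc a w j) * amin ^ M"
        using aL am by (simp add: mult_right_mono)
      then have "amin ^ Suc M * bprod b w n \<le> (\<Prod>j<N. Xsc a w j)" using pl by (simp add: ac_simps)
      from mult_mono[OF this t] show ?thesis
        using kappa_pos bpos am less_imp_le[OF good_prod_pos[OF gX]] by (simp add: ac_simps)
    qed
    then show False using sep close by linarith
  next
    case False
    then have lt: "j' < j" using jj by auto
    have gap: "Xoc c w' k + Xsc a w' k \<le> Xoc c w k"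
      using c_gap[of i j' j] lt ir ri unfolding Xoc_def Xsc_def i_def j_def j'_def by auto
    obtain N where N: "Suc k \<le> N" "N < Suc k + M" "w N = (i0, m i0)"
      using occ[OF rec kn dig_i0m] by blast
    have sep: "(\<Prod>j<N. Xsc a w j) * ser (\<lambda>i. Xsc a w (i + N)) (\<lambda>i. Xoc c w (i + N)) \<le> X w - X w'"
      unfolding X_def by (rule sep_down[OF gX gX' eqX gap]) (use N in simp)
    have st: "ser (\<lambda>i. Xsc a w (i + N)) (\<lambda>i. Xoc c w (i + N))
        = c i0 (m i0) + a i0 (m i0) * ser (\<lambda>i. Xsc a w (Suc i + N)) (\<lambda>i. Xoc c w (Suc i + N))"
      using ser_step[OF good_sh[OF gX, of N]] N(3) by (simp add: Xsc_def Xoc_def)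
    have s1: "0 \<le> ser (\<lambda>i. Xsc a w (Suc i + N)) (\<lambda>i. Xoc c w (Suc i + N))"
      using ser_nonneg[OF good_sh[OF gX, of "Suc N"]] by simp
    have "c i0 1 + a i0 1 \<le> c i0 (m i0)" using c_gap[of i0 1 "m i0"] i0 m2 by auto
    moreover have "0 < a i0 (m i0)" using dig_ab[OF dig_i0m] by auto
    ultimately have t: "\<kappa> \<le> ser (\<lambda>i. Xsc a w (i + N)) (\<lambda>i. Xoc c w (i + N))"
    proof -
      have "0 \<le> a i0 (m i0) * ser (\<lambda>i. Xsc a w (Suc i + N)) (\<lambda>i. Xoc c w (Suc i + N))"
        using s1 \<open>0 < a i0 (m i0)\<close> by simp
      moreover have "\<kappa> \<le> c i0 1 + a i0 1" unfolding \<kappa>_def by simp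
      ultimately show ?thesis unfolding st using \<open>c i0 1 + a i0 1 \<le> c i0 (m i0)\<close> by linarith
    qed
    have pl: "(\<Prod>j<L. Xsc a w j) * amin ^ M \<le> (\<Prod>j<N. Xsc a w j)"
      by (rule prod_lower2[OF Xb am]) (use N k in simp)
    have "\<kappa> * amin ^ Suc M * bprod b w n \<le> (\<Prod>j<N. Xsc a w j) * ser (\<lambda>i. Xsc a w (i + N)) (\<lambda>i. Xoc c w (i + N))"
    proof -
      have "amin * bprod b w n * amin ^ M \<le> (\<Prod>j<L. Xsc a w j) * amin ^ M"
        using aL am by (simp add: mult_right_mono)
      then have "amin ^ Suc M * bprod b w n \<le> (\<Prod>j<N. Xsc a w j)" using pl by (simp add: ac_simps)
      from mult_mono[OF this t] show ?thesis
        using kappa_pos bpos am less_imp_le[OF good_prod_pos[OF gX]] by (simp add: ac_simps)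
    qed
    then show False using sep close by linarith
  qed
qed

lemma square_of_close:
  assumes w: "w \<in> SigmaD p m" and w': "w' \<in> SigmaD p m"
    and rec: "\<forall>j\<le>n. \<forall>dd\<in>digits p m. \<exists>k. j \<le> k \<and> k < j + M \<and> w k = dd"
    and n1: "1 \<le> n"
    and close: "dist (coding a b c d w') (coding a b c d w) < \<kappa> * amin ^ Suc M * bprod b w n"
  shows "w' \<in> approx_square p m a b n w"
proof -
  have dX: "\<bar>X w' - X w\<bar> < \<kappa> * amin ^ Suc M * bprod b w n"
    using dist_fst_le[of "coding a b c d w'" "coding a b c d w"] close
    unfolding coding_eq[OF w] coding_eq[OF w'] by (simp add: dist_real_def)
  have dY0: "\<bar>Y w' - Y w\<bar> < \<kappa> * amin ^ Suc M * bprod b w n"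
    using dist_snd_le[of "coding a b c d w'" "coding a b c d w"] close
    unfolding coding_eq[OF w] coding_eq[OF w'] by (simp add: dist_real_def)
  have "\<kappa> * amin ^ Suc M * bprod b w n \<le> \<kappa> * amin ^ M * bprod b w n"
    using kappa_pos amin_pos amin_lt1 bprod_pos[OF w, of n]
    by (intro mult_right_mono mult_left_mono power_decreasing) auto
  then have dY: "\<bar>Y w' - Y w\<bar> < \<kappa> * amin ^ M * bprod b w n" using dY0 by linarith
  have rows: "\<forall>k<n. fst (w' k) = fst (w k)" by (rule rows_agree[OF w w' rec dY])
  have cols: "\<forall>k<Lfun a b n w. w' k = w k" by (rule cols_agree[OF w w' rec rows n1 dX])
  show ?thesis unfolding approx_square_def using w' rows cols by auto
qed

end

lemma keyA1:
  fixes g y :: ereal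
  assumes "ereal t < g" "t \<le> 0" "y < ereal t" "0 < q" "q \<le> 1"
  shows "y < g * ereal q"
proof (cases g)
  case (real u)
  have "t < u" using assms(1) real by simp
  have "t < u * q"
  proof (cases "u \<ge> 0")
    case True
    show ?thesis
    proof (cases "t < 0")
      case True then show ?thesis using \<open>0 \<le> u\<close> assms(4) by (smt (verit) mult_nonneg_nonneg)
    next
      case False
      then have "0 < u" using \<open>t < u\<close> assms(2) by linarith
      then show ?thesis using assms(2,4) by (smt (verit) mult_pos_pos)
    qed
  next
    case False
    then have "u \<le> u * q" using assms(4,5) by (simp add: mult_le_cancel_left1)
    then show ?thesis using \<open>t < u\<close> by linarith
  qed
  then show ?thesis using assms(3) real by (simp add: less_trans)
next
  case PInf then show ?thesis using assms by (cases y) auto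
next
  case MInf then show ?thesis using assms by simp
qed

lemma keyA2:
  fixes g y :: ereal
  assumes "ereal t < g" "0 < t" "y \<le> 0" "0 < q"
  shows "y < g * ereal q"
proof (cases g)
  case (real u)
  then have "0 < u * q" using assms by simp
  then show ?thesis using assms(3) real by (simp add: le_less_trans)
next
  case PInf then show ?thesis using assms by (cases y) auto
next
  case MInf then show ?thesis using assms by simp
qed

lemma keyA3:
  fixes g :: ereal
  assumes "ereal t < g" "0 < t" "0 < s" "s / t < q"
  shows "ereal s < g * ereal q"
proof -
  have "0 < s / t" using assms by simp
  then have q0: "0 < q" using assms(4) by linarith
  show ?thesis
  proof (cases g)
    case (real u)
    then have "t < u" using assms by simp
    have "s = t * (s / t)" using assms by simp
    also have "\<dots> < t * q" using assms by (intro mult_strict_left_mono) auto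
    also have "\<dots> < u * q" using \<open>t < u\<close> q0 by simp
    finally show ?thesis using real by simp
  next
    case PInf then show ?thesis using q0 by simp
  next
    case MInf then show ?thesis using assms by simp
  qed
qed

lemma LiminfA:
  fixes f :: "real \<Rightarrow> ereal" and g :: "nat \<Rightarrow> ereal" and N :: "real \<Rightarrow> nat" and q :: "real \<Rightarrow> real"
  assumes ev: "eventually (\<lambda>r. g (N r) * ereal (q r) \<le> f r \<and> 0 < q r \<and> q r \<le> 1) F"
    and qlim: "\<And>\<theta>. \<theta> < 1 \<Longrightarrow> eventually (\<lambda>r. \<theta> < q r) F"
    and Nlim: "\<And>K. eventually (\<lambda>r. K \<le> N r) F"
  shows "Liminf sequentially g \<le> Liminf F f"
  unfolding le_Liminf_iff
proof (intro allI impI)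
  fix y assume y: "y < Liminf sequentially g"
  obtain y' where y': "y < y'" "y' < Liminf sequentially g" using dense[OF y] by blast
  have "eventually (\<lambda>n. y' < g n) sequentially" using y'(2) le_Liminf_iff by blast
  then obtain K where K: "\<And>n. K \<le> n \<Longrightarrow> y' < g n" by (auto simp: eventually_sequentially)
  have evg: "eventually (\<lambda>r. y' < g (N r)) F"
    using Nlim[of K] by eventually_elim (use K in auto)
  have "y' \<noteq> -\<infinity>" using y'(1) by auto
  moreover have "y' \<noteq> \<infinity>" using y'(2) by auto
  ultimately obtain t where t: "y' = ereal t" by (cases y') auto
  show "eventually (\<lambda>r. y < f r) F"
  proof (cases "t \<le> 0")
    case True
    show ?thesis using ev evg
    proof eventually_elim
      case (elim r)
      then have "y < g (N r) * ereal (q r)" using keyA1[of t "g (N r)" y "q r"] True y'(1) t by auto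
      then show ?case using elim by (meson less_le_trans)
    qed
  next
    case False
    show ?thesis
    proof (cases "y \<le> 0")
      case True
      show ?thesis using ev evg
      proof eventually_elim
        case (elim r)
        then have "y < g (N r) * ereal (q r)" using keyA2[of t "g (N r)" y "q r"] True False t by auto
        then show ?case using elim by (meson less_le_trans)
      qed
    next
      case yp: False
      then obtain s where s: "y = ereal s" "0 < s" using y'(1) t by (cases y) auto
      have "s < t" using y'(1) s t by simp
      then have "s / t < 1" using False by simp
      show ?thesis using ev evg qlim[OF \<open>s / t < 1\<close>]
      proof eventually_elim
        case (elim r)
        then have "y < g (N r) * ereal (q r)" using keyA3[of t "g (N r)" s "q r"] False s t by auto
        then show ?case using elim by (meson less_le_trans)
      qed
    qed
  qed
qed

lemma keyB:
  fixes g y :: ereal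
  assumes "ereal t < g * ereal q" "y < ereal t" "1 \<le> q" "q < \<theta>" "\<And>s. y = ereal s \<Longrightarrow> 0 < s \<Longrightarrow> \<theta> = t / s"
  shows "y < g"
proof (cases g)
  case (real u)
  show ?thesis
  proof (cases "u \<le> 0")
    case True
    then have "u * q \<le> u" using assms(3) by (simp add: mult_le_cancel_left2)
    moreover have "t < u * q" using assms(1) real by simp
    ultimately have "t < u" by linarith
    then show ?thesis using assms(2) real by (cases y) auto
  next
    case False
    show ?thesis
    proof (cases y)
      case (real s)
      show ?thesis
      proof (cases "0 < s")
        case True
        have th: "\<theta> = t / s" using assms(5)[OF real True] .
        have tuq: "t < u * q" using assms(1) \<open>g = ereal u\<close> by simp
        have st: "s < t" using assms(2) real by simp
        have "u * q < u * \<theta>" using False assms(4) by simp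
        then have "t < u * (t / s)" using tuq th by simp
        then have "t * s < u * t" using True by (simp add: field_simps)
        then have "s * t < u * t" by (simp add: mult.commute)
        then have "s < u" using st True by (simp add: mult_less_cancel_right)
        then show ?thesis using real \<open>g = ereal u\<close> by simp
      next
        case False
        then show ?thesis using real \<open>g = ereal u\<close> \<open>\<not> u \<le> 0\<close> by simp
      qed
    qed (use \<open>g = ereal u\<close> assms(2) in simp_all)
  qed
next
  case PInf then show ?thesis using assms(2) by (cases y) simp_all
next
  case MInf then show ?thesis using assms(1,3) by simp
qed

lemma LiminfB:
  fixes f :: "real \<Rightarrow> ereal" and g :: "nat \<Rightarrow> ereal" and rs :: "nat \<Rightarrow> real" and q :: "nat \<Rightarrow> real"
  assumes rs: "filterlim rs F sequentially"
    and ev: "eventually (\<lambda>n. f (rs n) \<le> g n * ereal (q n) \<and> 1 \<le> q n) sequentially"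
    and qlim: "\<And>\<theta>. 1 < \<theta> \<Longrightarrow> eventually (\<lambda>n. q n < \<theta>) sequentially"
  shows "Liminf F f \<le> Liminf sequentially g"
proof -
  have 1: "Liminf F f \<le> Liminf sequentially (\<lambda>n. f (rs n))"
    unfolding le_Liminf_iff
  proof (intro allI impI)
    fix y assume "y < Liminf F f"
    then have "eventually (\<lambda>r. y < f r) F" using le_Liminf_iff by blast
    then show "eventually (\<lambda>n. y < f (rs n)) sequentially"
      using rs unfolding filterlim_iff by blast
  qed
  have 2: "Liminf sequentially (\<lambda>n. f (rs n)) \<le> Liminf sequentially (\<lambda>n. g n * ereal (q n))"
    using ev by (intro Liminf_mono) (auto elim: eventually_mono)
  have 3: "Liminf sequentially (\<lambda>n. g n * ereal (q n)) \<le> Liminf sequentially g"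
    unfolding le_Liminf_iff
  proof (intro allI impI)
    fix y assume y: "y < Liminf sequentially (\<lambda>n. g n * ereal (q n))"
    obtain y' where y': "y < y'" "y' < Liminf sequentially (\<lambda>n. g n * ereal (q n))" using dense[OF y] by blast
    have "\<forall>z<Liminf sequentially (\<lambda>n. g n * ereal (q n)). eventually (\<lambda>n. z < g n * ereal (q n)) sequentially"
      using le_Liminf_iff[of "Liminf sequentially (\<lambda>n. g n * ereal (q n))" sequentially "\<lambda>n. g n * ereal (q n)"] by simp
    then have evg: "eventually (\<lambda>n. y' < g n * ereal (q n)) sequentially" using y'(2) by blast
    have "y' \<noteq> -\<infinity>" using y'(1) by auto
    moreover have "y' \<noteq> \<infinity>" using y'(2) by auto
    ultimately obtain t where t: "y' = ereal t" by (cases y') auto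
    define \<theta> where "\<theta> = (case y of ereal s \<Rightarrow> if 0 < s then t / s else 2 | _ \<Rightarrow> 2)"
    have th1: "1 < \<theta>"
    proof (cases y)
      case (real s)
      then have st: "s < t" using y'(1) t by simp
      show ?thesis
      proof (cases "0 < s")
        case True
        then have "1 < t / s" using st by simp
        then show ?thesis using real True unfolding \<theta>_def by simp
      next
        case False then show ?thesis using real unfolding \<theta>_def by simp
      qed
    qed (auto simp: \<theta>_def)
    have th2: "y = ereal s \<Longrightarrow> 0 < s \<Longrightarrow> \<theta> = t / s" for s by (simp add: \<theta>_def)
    show "eventually (\<lambda>n. y < g n) sequentially" using evg ev qlim[OF th1]
    proof eventually_elim
      case (elim n)
      show ?case by (rule keyB[of t "g n" "q n" y \<theta>]) (use elim y'(1) t th2 in auto)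
    qed
  qed
  show ?thesis using 1 2 3 by (meson order_trans)
qed

lemma max_o:
  fixes f :: "nat \<Rightarrow> nat"
  assumes lim: "(\<lambda>n. real (f n) / real n) \<longlonglongrightarrow> 0"
  shows "(\<lambda>n. real (Max (f ` {..n})) / real n) \<longlonglongrightarrow> 0"
proof (rule LIMSEQ_I)
  fix r :: real assume r: "0 < r"
  obtain J where J: "\<And>n. J \<le> n \<Longrightarrow> \<bar>real (f n) / real n\<bar> < r / 2"
    using LIMSEQ_D[OF lim, of "r/2"] r by auto
  define C where "C = Max (f ` {..J})"
  define N where "N = max (Suc J) (nat \<lceil>2 * real C / r\<rceil> + 1)"
  show "\<exists>no. \<forall>n\<ge>no. norm (real (Max (f ` {..n})) / real n - 0) < r"
  proof (intro exI allI impI)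
    fix n assume n: "N \<le> n"
    have n0: "0 < n" using n N_def by simp
    have nJ: "J < n" using n N_def by simp
    have bnd: "real (f j) \<le> real C + r / 2 * real n" if "j \<le> n" for j
    proof (cases "j \<le> J")
      case True
      then have "f j \<le> C" unfolding C_def by (intro Max_ge) auto
      moreover have "0 \<le> r / 2 * real n" using r by simp
      ultimately show ?thesis by linarith
    next
      case False
      then have "real (f j) / real j < r / 2" using J[of j] by simp
      moreover have "0 < real j" using False by simp
      ultimately have "real (f j) < r / 2 * real j" by (simp add: divide_less_eq)
      moreover have "r / 2 * real j \<le> r / 2 * real n" using that r by simp
      ultimately show ?thesis by simp
    qed
    have "Max (f ` {..n}) \<in> f ` {..n}" by (intro Max_in) auto
    then obtain j where j: "j \<le> n" "Max (f ` {..n}) = f j" by (metis atMost_iff imageE)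
    have M: "real (Max (f ` {..n})) \<le> real C + r / 2 * real n" using bnd[OF j(1)] j(2) by simp
    have "2 * real C / r < real n"
    proof -
      have "2 * real C / r \<le> real (nat \<lceil>2 * real C / r\<rceil>)" by linarith
      moreover have "nat \<lceil>2 * real C / r\<rceil> + 1 \<le> n" using n N_def by simp
      ultimately show ?thesis by linarith
    qed
    then have "2 * real C < r * real n" using r by (simp add: divide_less_eq mult.commute)
    then have "real C + r / 2 * real n < r * real n" by simp
    then have "real (Max (f ` {..n})) < r * real n" using M by linarith
    then have "real (Max (f ` {..n})) / real n < r" using n0 by (simp add: divide_less_eq mult.commute)
    then show "norm (real (Max (f ` {..n})) / real n - 0) < r" by simp
  qed
qed

context lg begin

lemma rec_from_Rmax:
  assumes lim: "(\<lambda>n. ereal_of_enat (Rmax p m n w) / ereal (real n)) \<longlonglongrightarrow> 0"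
  shows "\<exists>\<rho>::nat\<Rightarrow>nat. (\<lambda>n. real (\<rho> n) / real n) \<longlonglongrightarrow> 0 \<and>
           (\<forall>j. \<forall>dd\<in>digits p m. \<exists>k. j \<le> k \<and> k < j + \<rho> j \<and> w k = dd)"
proof -
  have "eventually (\<lambda>n. ereal_of_enat (Rmax p m n w) / ereal (real n) < 1) sequentially"
    using order_tendstoD(2)[OF lim] by simp
  then obtain N1 where N1: "\<And>n. N1 \<le> n \<Longrightarrow> ereal_of_enat (Rmax p m n w) / ereal (real n) < 1"
    by (auto simp: eventually_sequentially)
  have fin_big: "Rmax p m n w \<noteq> \<infinity>" if "max N1 1 \<le> n" for n
  proof
    assume "Rmax p m n w = \<infinity>"
    moreover have "0 < real n" using that by simp
    ultimately have "ereal_of_enat (Rmax p m n w) / ereal (real n) = \<infinity>"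
      by (simp add: divide_ereal_def)
    then show False using N1[of n] that by simp
  qed
  have ne: "digits p m \<noteq> {}" using d11 by auto
  have Rd_le: "Rd n w dd \<le> Rmax p m n w" if "dd \<in> digits p m" for n dd
    unfolding Rmax_def using that digits_finite by (intro Max_ge) auto
  have occ_all: "\<exists>k\<ge>j. w k = dd" if "dd \<in> digits p m" for j dd
  proof -
    define n where "n = max j (max N1 1)"
    have f: "Rmax p m n w \<noteq> \<infinity>" using fin_big[of n] n_def by simp
    have "Rd n w dd \<noteq> \<infinity>"
    proof
      assume "Rd n w dd = \<infinity>"
      then show False using Rd_le[OF that, of n] f by simp
    qed
    have "\<exists>k\<ge>n. w k = dd"
    proof (rule ccontr)
      assume "\<not> (\<exists>k\<ge>n. w k = dd)"
      then have "Rd n w dd = \<infinity>" unfolding Rd_def by simp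
      then show False using \<open>Rd n w dd \<noteq> \<infinity>\<close> by simp
    qed
    then obtain k where "n \<le> k" "w k = dd" by blast
    then show ?thesis using n_def by (intro exI[of _ k]) simp
  qed
  have Rd_eq: "Rd j w dd = enat ((LEAST k. j \<le> k \<and> w k = dd) + 1 - j)" if "dd \<in> digits p m" for j dd
    using occ_all[OF that, of j] unfolding Rd_def by auto
  have fin: "Rmax p m j w \<noteq> \<infinity>" for j
  proof -
    have "Rmax p m j w \<in> Rd j w ` digits p m"
      unfolding Rmax_def using digits_finite ne by (intro Max_in) auto
    then show ?thesis using Rd_eq by auto
  qed
  define \<rho> where "\<rho> j = the_enat (Rmax p m j w)" for j
  have \<rho>e: "enat (\<rho> j) = Rmax p m j w" for j using fin[of j] unfolding \<rho>_def by (cases "Rmax p m j w") auto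
  have occ: "\<exists>k. j \<le> k \<and> k < j + \<rho> j \<and> w k = dd" if "dd \<in> digits p m" for j dd
  proof -
    define K where "K = (LEAST k. j \<le> k \<and> w k = dd)"
    have K: "j \<le> K" "w K = dd" using LeastI_ex[OF occ_all[OF that, of j]] unfolding K_def by auto
    have "enat (K + 1 - j) \<le> enat (\<rho> j)" using Rd_le[OF that, of j] Rd_eq[OF that, of j] \<rho>e[of j] K_def by simp
    then have "K + 1 - j \<le> \<rho> j" by simp
    then have "K < j + \<rho> j" using K by linarith
    then show ?thesis using K by blast
  qed
  have "(\<lambda>n. ereal (real (\<rho> n) / real n)) \<longlonglongrightarrow> ereal 0"
  proof -
    have "eventually (\<lambda>n. ereal_of_enat (Rmax p m n w) / ereal (real n) = ereal (real (\<rho> n) / real n)) sequentially"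
      unfolding eventually_sequentially
    proof (intro exI allI impI)
      fix n :: nat assume n: "1 \<le> n"
      have "ereal_of_enat (Rmax p m n w) = ereal (real (\<rho> n))"
        unfolding \<rho>e[of n, symmetric] by simp
      then show "ereal_of_enat (Rmax p m n w) / ereal (real n) = ereal (real (\<rho> n) / real n)"
        using n by simp
    qed
    from tendsto_cong[OF this] lim show ?thesis by (simp add: zero_ereal_def)
  qed
  then have "(\<lambda>n. real (\<rho> n) / real n) \<longlonglongrightarrow> 0" by simp
  then show ?thesis using occ by blast
qed

end

lemma elog_mono: "0 \<le> s \<Longrightarrow> s \<le> t \<Longrightarrow> elog s \<le> elog t"
  unfolding elog_def by auto

lemma div_neg_anti:
  assumes "y < 0" "e1 \<le> e2"
  shows "e2 / ereal y \<le> e1 / ereal y"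
proof -
  have i: "inverse (ereal y) = ereal (1 / y)" using assms(1) by (simp add: inverse_eq_divide)
  have "e2 * ereal (1/y) \<le> e1 * ereal (1/y)"
  proof -
    have "- ereal (1/y) \<ge> 0" using assms(1) by simp
    then have "e1 * (- ereal (1/y)) \<le> e2 * (- ereal (1/y))"
      using assms(2) by (intro ereal_mult_right_mono) auto
    moreover have "e * (- ereal (1/y)) = - (e * ereal (1/y))" for e :: ereal
      by (rule ereal_mult_minus_right)
    ultimately have "- (e1 * ereal (1/y)) \<le> - (e2 * ereal (1/y))" by metis
    then show ?thesis by (simp only: ereal_minus_le_minus)
  qed
  then show ?thesis unfolding divide_ereal_def i .
qed

lemma div_mult_id:
  assumes "x \<noteq> 0" "y \<noteq> 0"
  shows "e / ereal x * ereal (x / y) = e / ereal y"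
proof -
  have "e / ereal x * ereal (x / y) = e * (ereal (1 / x) * ereal (x / y))"
    unfolding divide_ereal_def using assms by (simp add: mult.assoc)
  also have "ereal (1 / x) * ereal (x / y) = ereal (1 / y)" using assms by simp
  finally show ?thesis unfolding divide_ereal_def using assms by (simp add: inverse_eq_divide)
qed


context lgm begin

lemma beta_lim: assumes w: "w \<in> SigmaD p m" shows "(\<lambda>n. bprod b w n) \<longlonglongrightarrow> 0"
proof (rule Lim_null_comparison)
  show "eventually (\<lambda>n. norm (bprod b w n) \<le> \<sigma> ^ n) sequentially"
    using bprod_le_sigma[OF w] less_imp_le[OF bprod_pos[OF w]] by simp
  show "(\<lambda>n. \<sigma> ^ n) \<longlonglongrightarrow> 0" using sigma_nonneg sigma_lt1 by (intro LIMSEQ_power_zero) auto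
qed

lemma beta_small: assumes w: "w \<in> SigmaD p m" and e: "0 < e"
  shows "eventually (\<lambda>n. bprod b w n < e) sequentially"
  using order_tendstoD(2)[OF beta_lim[OF w] e] .

lemma part_ii:
  assumes w: "w \<in> SigmaD p m"
  shows "Liminf (at_right 0) (\<lambda>r. elog (measure (distr \<mu> borel (coding a b c d)) (cball (coding a b c d w) r)) / ereal (ln r))
      \<le> Liminf sequentially (\<lambda>n. elog (measure \<mu> (approx_square p m a b n w)) / ereal (ln (bprod b w n)))"
proof (rule LiminfB[where rs="\<lambda>n. 2 * bprod b w n" and q="\<lambda>n. ln (bprod b w n) / ln (2 * bprod b w n)"])
  let ?\<nu> = "distr \<mu> borel (coding a b c d)"
  show "filterlim (\<lambda>n. 2 * bprod b w n) (at_right 0) sequentially"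
  proof (rule tendsto_imp_filterlim_at_right)
    show "(\<lambda>n. 2 * bprod b w n) \<longlonglongrightarrow> 0" using tendsto_mult_right_zero[OF beta_lim[OF w], of 2] by (simp add: mult.commute)
    show "eventually (\<lambda>n. 0 < 2 * bprod b w n) sequentially" using bprod_pos[OF w] by simp
  qed
  have "eventually (\<lambda>n. bprod b w n < 1/4) sequentially"
    using beta_small[OF w, of "1/4"] by simp
  then show "eventually (\<lambda>n. elog (measure ?\<nu> (cball (coding a b c d w) (2 * bprod b w n))) / ereal (ln (2 * bprod b w n))
      \<le> elog (measure \<mu> (approx_square p m a b n w)) / ereal (ln (bprod b w n)) * ereal (ln (bprod b w n) / ln (2 * bprod b w n))
      \<and> 1 \<le> ln (bprod b w n) / ln (2 * bprod b w n)) sequentially"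
  proof (eventually_elim)
    case (elim n)
    define \<beta> where "\<beta> = bprod b w n"
    have b0: "0 < \<beta>" and b1: "\<beta> < 1/4" using bprod_pos[OF w] elim unfolding \<beta>_def by auto
    have l2: "ln (2 * \<beta>) < 0" using b0 b1 by simp
    have l1: "ln \<beta> < ln (2 * \<beta>)" using b0 by simp
    have cb: "cball (coding a b c d w) (2 * \<beta>) \<in> sets borel" by simp
    have sub: "approx_square p m a b n w \<subseteq> coding a b c d -` cball (coding a b c d w) (2 * \<beta>) \<inter> SigmaD p m"
    proof
      fix w' assume h: "w' \<in> approx_square p m a b n w"
      then have "w' \<in> SigmaD p m" by (simp add: approx_square_def)
      moreover have "dist (coding a b c d w) (coding a b c d w') \<le> 2 * \<beta>"
        using close_of_square[OF w h] unfolding \<beta>_def by (simp add: dist_commute)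
      ultimately show "w' \<in> coding a b c d -` cball (coding a b c d w) (2 * \<beta>) \<inter> SigmaD p m" by simp
    qed
    have pre: "coding a b c d -` cball (coding a b c d w) (2 * \<beta>) \<inter> SigmaD p m \<in> sets \<mu>"
      using measurable_sets[OF coding_meas cb] space_mu by simp
    have "measure \<mu> (approx_square p m a b n w) \<le> measure ?\<nu> (cball (coding a b c d w) (2 * \<beta>))"
      unfolding nu_measure[OF cb] by (rule mu_mono[OF pre sub])
    then have "elog (measure \<mu> (approx_square p m a b n w)) \<le> elog (measure ?\<nu> (cball (coding a b c d w) (2 * \<beta>)))"
      by (intro elog_mono) auto
    then have "elog (measure ?\<nu> (cball (coding a b c d w) (2 * \<beta>))) / ereal (ln (2 * \<beta>))
        \<le> elog (measure \<mu> (approx_square p m a b n w)) / ereal (ln (2 * \<beta>))"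
      by (rule div_neg_anti[OF l2])
    also have "\<dots> = elog (measure \<mu> (approx_square p m a b n w)) / ereal (ln \<beta>) * ereal (ln \<beta> / ln (2 * \<beta>))"
      using l1 l2 by (intro div_mult_id[symmetric]) auto
    finally show ?case
      using l1 l2 unfolding \<beta>_def[symmetric] by (simp add: le_divide_eq)
  qed
  fix \<theta> :: real assume th: "1 < \<theta>"
  define T where "T = \<theta> * ln 2 / (1 - \<theta>)"
  have "eventually (\<lambda>n. bprod b w n < min (1/4) (exp T)) sequentially"
    using beta_small[OF w, of "min (1/4) (exp T)"] by simp
  then show "eventually (\<lambda>n. ln (bprod b w n) / ln (2 * bprod b w n) < \<theta>) sequentially"
  proof (eventually_elim)
    case (elim n)
    define \<beta> where "\<beta> = bprod b w n"
    have b0: "0 < \<beta>" and b1: "\<beta> < 1/4" and bT: "\<beta> < exp T" using bprod_pos[OF w] elim unfolding \<beta>_def by auto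
    have lT: "ln \<beta> < T" using bT b0 by (metis ln_less_cancel_iff exp_gt_zero ln_exp)
    have l2: "ln (2 * \<beta>) < 0" using b0 b1 by simp
    have e: "ln (2 * \<beta>) = ln 2 + ln \<beta>" using b0 by (simp add: ln_mult)
    have "T * (1 - \<theta>) = \<theta> * ln 2" unfolding T_def using th by simp
    moreover have "ln \<beta> * (1 - \<theta>) > T * (1 - \<theta>)" using lT th by (intro mult_strict_right_mono_neg) auto
    ultimately have "\<theta> * ln (2 * \<beta>) < ln \<beta>" unfolding e by (simp add: algebra_simps)
    then show ?case using l2 unfolding \<beta>_def[symmetric] by (simp add: divide_less_eq)
  qed
qed

end

locale lgm2 = lgm + lg2

locale lgw = lgm2 +
  fixes w :: "nat \<Rightarrow> nat \<times> nat" and M :: "nat \<Rightarrow> nat"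
  assumes w: "w \<in> SigmaD p m"
    and hM: "(\<lambda>n. real (M n) / real n) \<longlonglongrightarrow> 0"
    and occM: "\<forall>n. \<forall>j\<le>n. \<forall>dd\<in>digits p m. \<exists>k. j \<le> k \<and> k < j + M n \<and> w k = dd"
begin

definition rr where "rr n = \<kappa> * amin ^ Suc (M n) * bprod b w n"
definition S where "S r = {n. 1 \<le> n \<and> r < rr n}"
definition Nr where "Nr r = Max (S r)"

lemma rr_pos: "0 < rr n"
  unfolding rr_def using kappa_pos amin_pos bprod_pos[OF w] by simp

lemma rr_le_beta: "rr n \<le> bprod b w n"
proof -
  have "amin ^ Suc (M n) \<le> 1" using amin_pos amin_lt1 by (intro power_le_one) auto
  then have "\<kappa> * amin ^ Suc (M n) \<le> 1" using kappa_pos kappa_le1 amin_pos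
    by (meson less_imp_le mult_le_one zero_le_power)
  then show ?thesis unfolding rr_def using bprod_pos[OF w, of n] by (simp add: mult_left_le_one_le)
qed

lemma beta_lt1: "1 \<le> n \<Longrightarrow> bprod b w n < 1"
proof -
  assume n: "1 \<le> n"
  have "\<sigma> ^ n \<le> \<sigma> ^ 1" using n sigma_nonneg sigma_lt1 by (intro power_decreasing) auto
  then show ?thesis using bprod_le_sigma[OF w, of n] sigma_lt1 by simp
qed

lemma S_finite: assumes r: "0 < r" shows "finite (S r)"
proof -
  have "eventually (\<lambda>n. \<sigma> ^ n < r) sequentially"
    using order_tendstoD(2)[OF LIMSEQ_power_zero r] sigma_nonneg sigma_lt1 by simp
  then obtain K where K: "\<And>n. K \<le> n \<Longrightarrow> \<sigma> ^ n < r" by (auto simp: eventually_sequentially)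
  have "S r \<subseteq> {..<K}"
  proof
    fix n assume "n \<in> S r"
    then have "r < rr n" by (simp add: S_def)
    then have "r < \<sigma> ^ n" using rr_le_beta[of n] bprod_le_sigma[OF w, of n] by linarith
    then show "n \<in> {..<K}" using K[of n] by force
  qed
  then show ?thesis by (rule finite_subset) simp
qed

lemma Nr_props:
  assumes r: "0 < r" "r < rr 1"
  shows "1 \<le> Nr r" "r < rr (Nr r)" "rr (Suc (Nr r)) \<le> r"
proof -
  have ne: "1 \<in> S r" using r by (simp add: S_def)
  have in1: "Nr r \<in> S r" unfolding Nr_def using S_finite[OF r(1)] ne by (intro Max_in) auto
  then show "1 \<le> Nr r" "r < rr (Nr r)" by (auto simp: S_def)
  have "Suc (Nr r) \<notin> S r"
  proof
    assume "Suc (Nr r) \<in> S r"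
    then have "Suc (Nr r) \<le> Nr r" unfolding Nr_def using S_finite[OF r(1)] by (intro Max_ge) auto
    then show False by simp
  qed
  then show "rr (Suc (Nr r)) \<le> r" by (auto simp: S_def)
qed

lemma ev_small: "eventually (\<lambda>r. 0 < r \<and> r < rr K) (at_right 0)"
  unfolding eventually_at_right_field using rr_pos[of K] by blast

lemma Nlim: "eventually (\<lambda>r. K \<le> Nr r) (at_right 0)"
  using ev_small[of "max K 1"] ev_small[of 1]
proof eventually_elim
  case (elim r)
  then have "max K 1 \<in> S r" by (simp add: S_def)
  then have "max K 1 \<le> Nr r" unfolding Nr_def using S_finite elim by (intro Max_ge) auto
  then show ?case by simp
qed


lemma ev_main:
  "eventually (\<lambda>r. elog (measure \<mu> (approx_square p m a b (Nr r) w)) / ereal (ln (bprod b w (Nr r)))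
        * ereal (ln (bprod b w (Nr r)) / ln r)
      \<le> elog (measure (distr \<mu> borel (coding a b c d)) (cball (coding a b c d w) r)) / ereal (ln r)
      \<and> 0 < ln (bprod b w (Nr r)) / ln r \<and> ln (bprod b w (Nr r)) / ln r \<le> 1) (at_right 0)"
  using ev_small[of 1]
proof eventually_elim
  case (elim r)
  define n where "n = Nr r"
  have r0: "0 < r" and r1: "r < rr 1" using elim by auto
  have n1: "1 \<le> n" and rn: "r < rr n" using Nr_props[OF r0 r1] n_def by auto
  have b0: "0 < bprod b w n" by (rule bprod_pos[OF w])
  have b1: "bprod b w n < 1" by (rule beta_lt1[OF n1])
  have lb: "ln (bprod b w n) < 0" using b0 b1 by simp
  have lrb: "ln r < ln (bprod b w n)" using rn rr_le_beta[of n] r0 by simp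
  have lr: "ln r < 0" using lrb lb by linarith
  have cb: "cball (coding a b c d w) r \<in> sets borel" by simp
  have sub: "coding a b c d -` cball (coding a b c d w) r \<inter> SigmaD p m \<subseteq> approx_square p m a b n w"
  proof
    fix w' assume h: "w' \<in> coding a b c d -` cball (coding a b c d w) r \<inter> SigmaD p m"
    then have w': "w' \<in> SigmaD p m" by simp
    have "dist (coding a b c d w') (coding a b c d w) \<le> r" using h by (simp add: dist_commute)
    then have cl: "dist (coding a b c d w') (coding a b c d w) < \<kappa> * amin ^ Suc (M n) * bprod b w n"
      using rn unfolding rr_def by linarith
    have rec: "\<forall>j\<le>n. \<forall>dd\<in>digits p m. \<exists>k. j \<le> k \<and> k < j + M n \<and> w k = dd" using occM by blast
    show "w' \<in> approx_square p m a b n w" by (rule square_of_close[OF w w' rec n1 cl])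
  qed
  have "measure (distr \<mu> borel (coding a b c d)) (cball (coding a b c d w) r) \<le> measure \<mu> (approx_square p m a b n w)"
    unfolding nu_measure[OF cb] by (rule mu_mono[OF sq_sets sub])
  then have "elog (measure (distr \<mu> borel (coding a b c d)) (cball (coding a b c d w) r)) \<le> elog (measure \<mu> (approx_square p m a b n w))"
    by (intro elog_mono) auto
  then have "elog (measure \<mu> (approx_square p m a b n w)) / ereal (ln r)
      \<le> elog (measure (distr \<mu> borel (coding a b c d)) (cball (coding a b c d w) r)) / ereal (ln r)"
    by (rule div_neg_anti[OF lr])
  moreover have "elog (measure \<mu> (approx_square p m a b n w)) / ereal (ln (bprod b w n)) * ereal (ln (bprod b w n) / ln r)
      = elog (measure \<mu> (approx_square p m a b n w)) / ereal (ln r)"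
    using lb lr by (intro div_mult_id) auto
  moreover have "0 < ln (bprod b w n) / ln r" using lb lr by (simp add: divide_neg_neg)
  moreover have "ln (bprod b w n) / ln r \<le> 1" using lrb lr by (simp add: divide_le_eq)
  ultimately show ?case unfolding n_def by simp
qed


definition E where "E n = - ln \<kappa> - (real (M (Suc n)) + 2) * ln amin"

lemma MSuc_lim: "(\<lambda>n. real (M (Suc n)) / real n) \<longlonglongrightarrow> 0"
proof -
  have a: "(\<lambda>n. real (M (Suc n)) / real (Suc n)) \<longlonglongrightarrow> 0" using LIMSEQ_Suc[OF hM] by simp
  have b: "(\<lambda>n. real (Suc n) / real n) \<longlonglongrightarrow> 1" using LIMSEQ_Suc_n_over_n by simp
  have "(\<lambda>n. real (M (Suc n)) / real (Suc n) * (real (Suc n) / real n)) \<longlonglongrightarrow> 0 * 1"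
    by (rule tendsto_mult[OF a b])
  moreover have "real (M (Suc n)) / real (Suc n) * (real (Suc n) / real n) = real (M (Suc n)) / real n" for n
    by (simp add: field_simps del: of_nat_Suc)
  ultimately show ?thesis by simp
qed

lemma E_lim: "(\<lambda>n. E n / real n) \<longlonglongrightarrow> 0"
proof -
  define c0 where "c0 = - ln \<kappa> - 2 * ln amin"
  define c1 where "c1 = - ln amin"
  have e1: "E n = c0 + c1 * real (M (Suc n))" for n
    unfolding E_def c0_def c1_def by (simp add: algebra_simps)
  have e: "E n / real n = c0 / real n + c1 * (real (M (Suc n)) / real n)" for n
    unfolding e1 by (simp add: add_divide_distrib)
  have "(\<lambda>n. c0 / real n + c1 * (real (M (Suc n)) / real n)) \<longlonglongrightarrow> 0 + c1 * 0"
    by (intro tendsto_add tendsto_mult lim_const_over_n tendsto_const MSuc_lim)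
  then show ?thesis unfolding e by simp
qed

lemma lnr_lower:
  assumes r0: "0 < r" and r1: "r < rr 1"
  shows "ln (bprod b w (Nr r)) - E (Nr r) \<le> ln r"
proof -
  define n where "n = Nr r"
  have rS: "rr (Suc n) \<le> r" using Nr_props[OF r0 r1] n_def by auto
  have b0: "0 < bprod b w n" by (rule bprod_pos[OF w])
  have bs: "bprod b w n * amin \<le> bprod b w (Suc n)"
    unfolding bprod_Suc using Ysc_bnd[OF w, of n] b0 by (intro mult_left_mono) auto
  have k0: "0 < \<kappa>" and a0: "0 < amin" using kappa_pos amin_pos by auto
  have "ln (rr (Suc n)) = ln \<kappa> + real (Suc (M (Suc n))) * ln amin + ln (bprod b w (Suc n))"
    unfolding rr_def using k0 a0 bprod_pos[OF w, of "Suc n"] by (simp add: ln_mult ln_realpow algebra_simps)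
  moreover have "ln (bprod b w n) + ln amin \<le> ln (bprod b w (Suc n))"
  proof -
    have "ln (bprod b w n * amin) \<le> ln (bprod b w (Suc n))"
      using bs b0 a0 by (simp add: bprod_pos[OF w])
    then show ?thesis using b0 a0 by (simp add: ln_mult)
  qed
  moreover have "ln (rr (Suc n)) \<le> ln r" using rS rr_pos r0 by simp
  ultimately show ?thesis unfolding E_def n_def[symmetric] by (simp add: algebra_simps)
qed

lemma qlim:
  assumes th: "\<theta> < 1"
  shows "eventually (\<lambda>r. \<theta> < ln (bprod b w (Nr r)) / ln r) (at_right 0)"
proof (cases "\<theta> \<le> 0")
  case True
  show ?thesis using ev_main by eventually_elim (use True in linarith)
next
  case False
  then have th0: "0 < \<theta>" by simp
  have s0: "0 < \<sigma>" using b_le_sigma[of 1] b_pos[of 1] p1 by auto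
  define lam where "lam = - ln \<sigma>"
  have l0: "0 < lam" unfolding lam_def using s0 sigma_lt1 by simp
  define \<epsilon> where "\<epsilon> = lam * (1 - \<theta>) / (2 * \<theta>)"
  have e0: "0 < \<epsilon>" unfolding \<epsilon>_def using l0 th th0 by simp
  have "eventually (\<lambda>n. E n / real n < \<epsilon>) sequentially" using order_tendstoD(2)[OF E_lim e0] .
  then obtain K where K: "\<And>n. K \<le> n \<Longrightarrow> E n / real n < \<epsilon>" by (auto simp: eventually_sequentially)
  show ?thesis using Nlim[of "max K 1"] ev_small[of 1]
  proof eventually_elim
    case (elim r)
    define n where "n = Nr r"
    have r0: "0 < r" and r1: "r < rr 1" using elim by auto
    have nK: "K \<le> n" and n1: "1 \<le> n" using elim n_def by auto
    have En: "E n < \<epsilon> * real n" using K[OF nK] n1 by (simp add: divide_less_eq)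
    have low: "ln (bprod b w n) - E n \<le> ln r" using lnr_lower[OF r0 r1] n_def by simp
    have b0: "0 < bprod b w n" by (rule bprod_pos[OF w])
    have "ln (bprod b w n) \<le> ln (\<sigma> ^ n)" using bprod_le_sigma[OF w, of n] b0 by simp
    then have A: "real n * lam \<le> - ln (bprod b w n)" unfolding lam_def using s0 by (simp add: ln_realpow)
    have lr: "ln r < 0"
      using r1 rr_le_beta[of 1] beta_lt1[of 1] r0 by simp
    have "\<theta> * E n \<le> \<theta> * (\<epsilon> * real n)" using En th0 by simp
    also have "\<dots> = lam * (1 - \<theta>) * real n / 2" unfolding \<epsilon>_def using th0 by simp
    also have "\<dots> < (1 - \<theta>) * (real n * lam)" using l0 th n1 by (simp add: field_simps)
    also have "\<dots> \<le> (1 - \<theta>) * (- ln (bprod b w n))" using A th by (intro mult_left_mono) auto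
    finally have "\<theta> * E n < (1 - \<theta>) * (- ln (bprod b w n))" .
    then have "ln (bprod b w n) < \<theta> * (ln (bprod b w n) - E n)" by (simp add: algebra_simps)
    also have "\<dots> \<le> \<theta> * ln r" using low th0 by simp
    finally have "ln (bprod b w n) < \<theta> * ln r" .
    then show ?case using lr unfolding n_def[symmetric] by (simp add: less_divide_eq)
  qed
qed

lemma part_i_w:
  "Liminf sequentially (\<lambda>n. elog (measure \<mu> (approx_square p m a b n w)) / ereal (ln (bprod b w n)))
   \<le> Liminf (at_right 0) (\<lambda>r. elog (measure (distr \<mu> borel (coding a b c d)) (cball (coding a b c d w) r)) / ereal (ln r))"
  by (rule LiminfA[OF ev_main qlim Nlim])

end

theorem lemma2p1:
  fixes p :: nat and m :: "nat \<Rightarrow> nat"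
    and a c :: "nat \<Rightarrow> nat \<Rightarrow> real" and b d :: "nat \<Rightarrow> real"
    and \<mu> :: "(nat \<Rightarrow> nat \<times> nat) measure"
  assumes LG: "LG_system p m a b c d"
    and sets_mu: "sets \<mu> = sets (restrict_space borel (SigmaD p m))"
    and fin: "finite_measure \<mu>"
  defines "\<nu> \<equiv> distr \<mu> (borel :: (real \<times> real) measure) (coding a b c d)"
  shows
    "(two_dimensional p m \<longrightarrow>
       (\<forall>w\<in>SigmaD p m.
          ((\<lambda>n. ereal_of_enat (Rmax p m n w) / ereal (real n)) \<longlonglongrightarrow> 0) \<longrightarrow>
          Liminf (at_right 0) (\<lambda>r. elog (measure \<nu> (cball (coding a b c d w) r)) / ereal (ln r))
            \<ge> Liminf sequentially
                 (\<lambda>n. elog (measure \<mu> (approx_square p m a b n w)) / ereal (ln (bprod b w n)))))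
     \<and>
     (\<forall>w\<in>SigmaD p m.
          Liminf (at_right 0) (\<lambda>r. elog (measure \<nu> (cball (coding a b c d w) r)) / ereal (ln r))
            \<le> Liminf sequentially
                 (\<lambda>n. elog (measure \<mu> (approx_square p m a b n w)) / ereal (ln (bprod b w n))))"
  proof -
  interpret lgm p m a c b d \<mu>
    by (intro lgm.intro lg.intro lgm_axioms.intro LG sets_mu fin)
  have ii: "\<forall>w\<in>SigmaD p m.
          Liminf (at_right 0) (\<lambda>r. elog (measure \<nu> (cball (coding a b c d w) r)) / ereal (ln r))
            \<le> Liminf sequentially
                 (\<lambda>n. elog (measure \<mu> (approx_square p m a b n w)) / ereal (ln (bprod b w n)))"
  proof (intro ballI)
    fix w assume w: "w \<in> SigmaD p m"
    show "Liminf (at_right 0) (\<lambda>r. elog (measure \<nu> (cball (coding a b c d w) r)) / ereal (ln r))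
            \<le> Liminf sequentially
                 (\<lambda>n. elog (measure \<mu> (approx_square p m a b n w)) / ereal (ln (bprod b w n)))"
      unfolding \<nu>_def by (rule part_ii[OF w])
  qed
  have i: "two_dimensional p m \<longrightarrow>
       (\<forall>w\<in>SigmaD p m.
          ((\<lambda>n. ereal_of_enat (Rmax p m n w) / ereal (real n)) \<longlonglongrightarrow> 0) \<longrightarrow>
          Liminf (at_right 0) (\<lambda>r. elog (measure \<nu> (cball (coding a b c d w) r)) / ereal (ln r))
            \<ge> Liminf sequentially
                 (\<lambda>n. elog (measure \<mu> (approx_square p m a b n w)) / ereal (ln (bprod b w n))))"
  proof (intro impI ballI)
    fix w assume td: "two_dimensional p m" and w: "w \<in> SigmaD p m"
      and lim: "(\<lambda>n. ereal_of_enat (Rmax p m n w) / ereal (real n)) \<longlonglongrightarrow> 0"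
    have L2: "lgm2 p m a c b d \<mu>"
      by (intro lgm2.intro lg2.intro lg2_axioms.intro lgm.intro lg.intro lgm_axioms.intro LG sets_mu fin td)
    interpret lgm2 p m a c b d \<mu> by (rule L2)
    obtain \<rho> :: "nat \<Rightarrow> nat" where \<rho>: "(\<lambda>n. real (\<rho> n) / real n) \<longlonglongrightarrow> 0"
      "\<forall>j::nat. \<forall>dd\<in>digits p m. \<exists>k. j \<le> k \<and> k < j + \<rho> j \<and> w k = dd"
      using rec_from_Rmax[OF lim] by blast
    define M where "M n = Max (\<rho> ` {..n})" for n
    have hM: "(\<lambda>n. real (M n) / real n) \<longlonglongrightarrow> 0" unfolding M_def by (rule max_o[OF \<rho>(1)])
    have occM: "\<forall>n. \<forall>j\<le>n. \<forall>dd\<in>digits p m. \<exists>k. j \<le> k \<and> k < j + M n \<and> w k = dd"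
    proof (intro allI impI ballI)
      fix n j :: nat and dd assume j: "j \<le> n" and dd: "dd \<in> digits p m"
      obtain k where k: "j \<le> k" "k < j + \<rho> j" "w k = dd" using \<rho>(2) dd by blast
      have "\<rho> j \<le> M n" unfolding M_def using j by (intro Max_ge) auto
      then show "\<exists>k. j \<le> k \<and> k < j + M n \<and> w k = dd" using k by (intro exI[of _ k]) auto
    qed
    interpret lgw p m a c b d \<mu> w M
      by (intro lgw.intro L2 lgw_axioms.intro w hM occM)
    show "Liminf (at_right 0) (\<lambda>r. elog (measure \<nu> (cball (coding a b c d w) r)) / ereal (ln r))
            \<ge> Liminf sequentially
                 (\<lambda>n. elog (measure \<mu> (approx_square p m a b n w)) / ereal (ln (bprod b w n)))"
      unfolding \<nu>_def by (rule part_i_w)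
  qed
  show ?thesis by (rule conjI[OF i ii])
qed

end
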